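(* Let $W\sim\mathcal{N}_d(0,I)$ and let $f:\mathbb{R}^d\to\mathbb{R}$ be differentiable. Let $\Psi(L)=\mathbb{P}(\|\nabla f(W)\|_2^2>L)$ for $L\ge0$, and define for $L,\alpha,t>0$ \[ \Delta(L,\alpha,t)=e^{\alpha^2\pi^2L/4-\alpha t}+\Big(\Psi(L)+\frac{\pi\alpha}{2}\sqrt{\Psi(L)\,\mathbb{E}(\|\nabla f(W)\|_2^2)}\Big). \] Then for all $\alpha>0$ and $t>0$, \[ \mathbb{E}\big\{\exp(\alpha\{f(W)-\mathbb{E}f(W)\})\wedge e^{\alpha t}\big\}\le e^{\alpha t}\inf_{L>0}\Delta(L,\alpha,t), \] and \[ \mathbb{P}(|f(W)-\mathbb{E}f(W)|>t)\le2\inf_{\alpha,L>0}\Delta(L,\alpha,t). \] In particular, for all $L>0$ and $t>0$, \[ \mathbb{P}(|f(W)-\mathbb{E}f(W)|>t)\le2\exp\Big(-\frac{t^2}{\pi^2L}\Big)+2(1+L^{-1/2})\big\{L^{-1}\mathbb{E}(\|\nabla f(W)\|_2^2)\,\Psi(L)\big\}^{1/2}. \]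
   Context: $a\wedge b=\min(a,b)$. *)

theory Defs
  imports "HOL-Analysis.Analysis"
begin

definition std_gauss :: "'a::euclidean_space measure" where
  "std_gauss = density lborel
     (\<lambda>x. ennreal ((2 * pi) powr (- real DIM('a) / 2) * exp (- (norm x)\<^sup>2 / 2)))"

definition grad :: "('a::euclidean_space \<Rightarrow> real) \<Rightarrow> 'a \<Rightarrow> 'a" where
  "grad f x = (\<Sum>i\<in>Basis. frechet_derivative f (at x) i *\<^sub>R i)"

definition Psi :: "('a::euclidean_space \<Rightarrow> real) \<Rightarrow> real \<Rightarrow> real" where
  "Psi f L = measure std_gauss {x. (norm (grad f x))\<^sup>2 > L}"

definition Delta :: "('a::euclidean_space \<Rightarrow> real) \<Rightarrow> real \<Rightarrow> real \<Rightarrow> real \<Rightarrow> real" where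
  "Delta f L \<alpha> t = exp (\<alpha>\<^sup>2 * pi\<^sup>2 * L / 4 - \<alpha> * t)
     + (Psi f L + pi * \<alpha> / 2 *
          sqrt (Psi f L * (\<integral>x. (norm (grad f x))\<^sup>2 \<partial>std_gauss)))"

end

theory Submission
  imports Defs "HOL-Probability.Probability"
begin

definition gd :: "'a::euclidean_space \<Rightarrow> real" where
  "gd x = (2 * pi) powr (- real DIM('a) / 2) * exp (- (norm x)\<^sup>2 / 2)"

lemma gd_nonneg: "0 \<le> gd x" by (simp add: gd_def)

lemma gd_measurable[measurable]: "gd \<in> borel_measurable borel"
  unfolding gd_def[abs_def] by measurable

lemma std_gauss_def': "std_gauss = density lborel (\<lambda>x. ennreal (gd x))"
  unfolding std_gauss_def gd_def ..

lemma gd_prod: "gd (x::'a::euclidean_space) = (\<Prod>b\<in>Basis. std_normal_density (x \<bullet> b))"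
proof -
  have n: "(norm x)\<^sup>2 = (\<Sum>b\<in>Basis. (x \<bullet> b)\<^sup>2)"
    by (simp only: power2_norm_eq_inner, subst euclidean_inner, simp add: power2_eq_square)
  have "exp (- (norm x)\<^sup>2 / 2) = (\<Prod>b\<in>Basis. exp (- (x \<bullet> b)\<^sup>2 / 2))"
    unfolding n by (simp add: sum_divide_distrib[symmetric] exp_sum[symmetric] sum_negf)
  moreover have "(2 * pi) powr (- real DIM('a) / 2) = (\<Prod>b\<in>(Basis::'a set). 1 / sqrt (2 * pi))"
  proof -
    have "(2 * pi) powr (- real DIM('a) / 2) = ((2*pi) powr (-1/2)) ^ DIM('a)"
      by (simp add: powr_realpow[symmetric] powr_powr)
    also have "(2*pi) powr (-1/2) = 1 / sqrt (2*pi)"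
      by (simp add: powr_minus_divide powr_half_sqrt)
    finally show ?thesis by simp
  qed
  ultimately have "gd x = (\<Prod>b\<in>(Basis::'a set). 1 / sqrt (2 * pi)) * (\<Prod>b\<in>Basis. exp (- (x \<bullet> b)\<^sup>2 / 2))"
    by (simp only: gd_def)
  also have "\<dots> = (\<Prod>b\<in>Basis. std_normal_density (x \<bullet> b))"
    by (simp only: std_normal_density_def prod.distrib)
  finally show ?thesis .
qed

lemma nn_integral_gd: "(\<integral>\<^sup>+x. ennreal (gd (x::'a::euclidean_space)) \<partial>lborel) = 1"
proof -
  have "(\<integral>\<^sup>+x. ennreal (gd (x::'a)) \<partial>lborel)
      = (\<integral>\<^sup>+x. (\<Prod>b\<in>Basis. ennreal (std_normal_density ((x::'a) \<bullet> b))) \<partial>lborel)"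
    by (rule nn_integral_cong) (simp add: gd_prod prod_ennreal)
  also have "\<dots> = (\<Prod>b\<in>(Basis::'a set). (\<integral>\<^sup>+x. ennreal (std_normal_density x) \<partial>lborel))"
    by (rule nn_integral_lborel_prod) auto
  also have "(\<integral>\<^sup>+x. ennreal (std_normal_density x) \<partial>lborel) = 1"
  proof -
    interpret prob_space "density lborel (normal_density 0 1)"
      by (rule prob_space_normal_density) simp
    show ?thesis using emeasure_space_1
      by (simp add: emeasure_density)
  qed
  finally show ?thesis by simp
qed

lemma prob_space_std_gauss: "prob_space (std_gauss :: 'a::euclidean_space measure)"
  by (rule prob_spaceI) (simp add: std_gauss_def' emeasure_density nn_integral_gd)

interpretation SG: prob_space "std_gauss :: 'a::euclidean_space measure"
  by (rule prob_space_std_gauss)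

lemma sets_std_gauss[simp, measurable_cong]: "sets std_gauss = sets borel"
  by (simp add: std_gauss_def')
lemma space_std_gauss[simp]: "space std_gauss = UNIV"
  by (simp add: std_gauss_def')

lemma nn_integral_std_gauss:
  "f \<in> borel_measurable borel \<Longrightarrow> (\<integral>\<^sup>+x. f x \<partial>std_gauss) = (\<integral>\<^sup>+x. ennreal (gd x) * f x \<partial>lborel)"
  by (simp add: std_gauss_def' nn_integral_density)

lemma gd_shift: "gd y * exp (v \<bullet> y) = exp ((norm v)\<^sup>2 / 2) * gd (y - v)"
proof -
  have "(norm (y - v))\<^sup>2 = (norm y)\<^sup>2 - 2 * (v \<bullet> y) + (norm v)\<^sup>2"
    by (simp add: power2_norm_eq_inner inner_diff_left inner_diff_right inner_commute)
  then have "- (norm y)\<^sup>2 / 2 + v \<bullet> y = (norm v)\<^sup>2 / 2 + - (norm (y - v))\<^sup>2 / 2" by (simp add: field_simps)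
  then have "exp (- (norm y)\<^sup>2 / 2) * exp (v \<bullet> y) = exp ((norm v)\<^sup>2 / 2) * exp (- (norm (y - v))\<^sup>2 / 2)"
    by (simp add: exp_add[symmetric])
  then show ?thesis
    by (simp add: gd_def mult_ac)
qed

lemma mgf_std_gauss: "(\<integral>\<^sup>+y. ennreal (exp (v \<bullet> y)) \<partial>(std_gauss::'a::euclidean_space measure))
   = ennreal (exp ((norm v)\<^sup>2 / 2))"
proof -
  have "(\<integral>\<^sup>+y. ennreal (exp (v \<bullet> y)) \<partial>(std_gauss::'a measure))
     = (\<integral>\<^sup>+y. ennreal (exp ((norm v)\<^sup>2 / 2)) * ennreal (gd (y - v)) \<partial>lborel)"
    by (subst nn_integral_std_gauss) (auto simp: ennreal_mult'[symmetric] gd_shift gd_nonneg intro!: nn_integral_cong)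
  also have "\<dots> = ennreal (exp ((norm v)\<^sup>2 / 2)) * (\<integral>\<^sup>+y. ennreal (gd (y - v)) \<partial>lborel)"
    by (rule nn_integral_cmult) simp
  also have "(\<integral>\<^sup>+y. ennreal (gd (y - v)) \<partial>lborel) = (\<integral>\<^sup>+y. ennreal (gd y) \<partial>(lborel::'a measure))"
  proof -
    have "(\<integral>\<^sup>+y. ennreal (gd y) \<partial>(lborel::'a measure)) = (\<integral>\<^sup>+y. ennreal (gd y) \<partial>distr lborel borel ((+) (-v)))"
      by (simp add: lborel_distr_plus)
    also have "\<dots> = (\<integral>\<^sup>+y. ennreal (gd (- v + y)) \<partial>lborel)"
      by (subst nn_integral_distr) auto
    finally show ?thesis by simp
  qed
  finally show ?thesis by (simp add: nn_integral_gd)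
qed

lemma sinh_ge_self: "0 \<le> x \<Longrightarrow> x \<le> sinh (x::real)"
proof -
  assume x: "0 \<le> x"
  have "(\<lambda>x. sinh x - x) 0 \<le> (\<lambda>x. sinh x - x) x"
  proof (rule DERIV_nonneg_imp_nondecreasing[OF x])
    fix y :: real
    show "\<exists>d. ((\<lambda>x. sinh x - x) has_real_derivative d) (at y) \<and> 0 \<le> d"
      by (rule exI[of _ "cosh y - 1"]) (auto intro!: derivative_eq_intros simp: cosh_real_ge_1)
  qed
  then show ?thesis by simp
qed

lemma cosh_ge_quad: "1 + u\<^sup>2/2 \<le> cosh (u::real)"
proof -
  have c: "cosh u = 1 + 2 * (sinh (\<bar>u\<bar>/2))\<^sup>2"
  proof -
    have "cosh u = cosh (2 * (\<bar>u\<bar>/2))" by simp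
    also have "\<dots> = 1 + 2 * (sinh (\<bar>u\<bar>/2))\<^sup>2"
      by (simp only: cosh_double cosh_square_eq)
    finally show ?thesis .
  qed
  have "\<bar>u\<bar>/2 \<le> sinh (\<bar>u\<bar>/2)" by (rule sinh_ge_self) simp
  then have "(\<bar>u\<bar>/2)\<^sup>2 \<le> (sinh (\<bar>u\<bar>/2))\<^sup>2" by (rule power_mono) simp
  then show ?thesis unfolding c by (simp add: power_divide)
qed

lemma mgf_integrable: "integrable (std_gauss::'a::euclidean_space measure) (\<lambda>y. exp (v \<bullet> y))"
  by (rule integrableI_nonneg) (auto simp: mgf_std_gauss)

lemma mgf_integral: "(\<integral>y. exp (v \<bullet> y) \<partial>(std_gauss::'a::euclidean_space measure)) = exp ((norm v)\<^sup>2 / 2)"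
proof -
  have "ennreal (\<integral>y. exp (v \<bullet> y) \<partial>(std_gauss::'a measure)) = ennreal (exp ((norm v)\<^sup>2 / 2))"
    by (subst nn_integral_eq_integral[symmetric]) (auto simp: mgf_integrable mgf_std_gauss)
  then show ?thesis by (simp add: integral_nonneg_AE)
qed

lemma measure_std_gauss_UNIV[simp]: "measure (std_gauss::'a::euclidean_space measure) UNIV = 1"
  using SG.prob_space by simp

lemma abs_inner_integrable: "integrable (std_gauss::'a::euclidean_space measure) (\<lambda>y. \<bar>v \<bullet> y\<bar>)"
proof (rule Bochner_Integration.integrable_bound)
  show "integrable std_gauss (\<lambda>y. exp (v \<bullet> y) + exp ((-v) \<bullet> y))"
    by (intro Bochner_Integration.integrable_add mgf_integrable)
  show "AE y in std_gauss. norm \<bar>v \<bullet> y\<bar> \<le> norm (exp (v \<bullet> y) + exp ((-v) \<bullet> y))"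
  proof
    fix y :: 'a
    have "\<bar>v \<bullet> y\<bar> \<le> exp (\<bar>v \<bullet> y\<bar>)" by (smt (verit) exp_ge_add_one_self)
    also have "\<dots> \<le> exp (v \<bullet> y) + exp ((-v) \<bullet> y)"
      by (cases "0 \<le> v \<bullet> y") (auto simp: add_increasing2 add_increasing)
    finally show "norm \<bar>v \<bullet> y\<bar> \<le> norm (exp (v \<bullet> y) + exp ((-v) \<bullet> y))" by simp
  qed
qed simp

lemma abs_inner_integral_le: "(\<integral>y. \<bar>v \<bullet> y\<bar> \<partial>(std_gauss::'a::euclidean_space measure)) \<le> norm v"
proof (cases "v = 0")
  case True then show ?thesis by simp
next
  case False
  define n where "n = norm v"
  have n: "0 < n" using False by (simp add: n_def)
  define r where "r = (\<integral>y. \<bar>v \<bullet> y\<bar> \<partial>(std_gauss::'a measure))"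
  have key: "r \<le> n + n * e / 2" if e: "0 < e" "e \<le> 1" for e
  proof -
    define s where "s = sqrt (2 * e) / n"
    have s: "0 < s" using e n by (simp add: s_def)
    have s2: "s\<^sup>2 * n\<^sup>2 = 2 * e" using e n by (simp add: s_def power_divide)
    have pw: "\<bar>z\<bar> \<le> n / 2 + (exp (s * z) + exp (- (s * z)) - 2) / (2 * s\<^sup>2 * n)" for z
    proof -
      have "\<bar>z\<bar> \<le> n / 2 + z\<^sup>2 / (2 * n)"
      proof -
        have "0 \<le> (\<bar>z\<bar> - n)\<^sup>2" by simp
        then have "2 * n * \<bar>z\<bar> \<le> n\<^sup>2 + z\<^sup>2" by (simp add: power2_eq_square algebra_simps)
        then show ?thesis using n by (simp add: field_simps power2_eq_square)
      qed
      also have "z\<^sup>2 / (2 * n) \<le> (exp (s * z) + exp (- (s * z)) - 2) / (2 * s\<^sup>2 * n)"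
      proof -
        have "1 + (s*z)\<^sup>2/2 \<le> cosh (s * z)" by (rule cosh_ge_quad)
        then have "(s*z)\<^sup>2 \<le> exp (s * z) + exp (- (s * z)) - 2" by (simp add: cosh_def)
        then have "s\<^sup>2 * z\<^sup>2 \<le> exp (s * z) + exp (- (s * z)) - 2" by (simp add: power_mult_distrib)
        then show ?thesis using s n by (simp add: field_simps)
      qed
      finally show ?thesis by simp
    qed
    have i1: "integrable (std_gauss::'a measure) (\<lambda>y. exp (s * (v \<bullet> y)))"
      using mgf_integrable[of "s *\<^sub>R v"] by simp
    have i2: "integrable (std_gauss::'a measure) (\<lambda>y. exp (- (s * (v \<bullet> y))))"
      using mgf_integrable[of "- (s *\<^sub>R v)"] by simp
    have m1: "(\<integral>y. exp (s * (v \<bullet> y)) \<partial>(std_gauss::'a measure)) = exp ((norm (s *\<^sub>R v))\<^sup>2 / 2)"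
      using mgf_integral[of "s *\<^sub>R v"] by simp
    have m2: "(\<integral>y. exp (- (s * (v \<bullet> y))) \<partial>(std_gauss::'a measure)) = exp ((norm (s *\<^sub>R v))\<^sup>2 / 2)"
      using mgf_integral[of "- (s *\<^sub>R v)"] by simp
    have "r \<le> (\<integral>y. n / 2 + (exp (s * (v \<bullet> y)) + exp (- (s * (v \<bullet> y))) - 2) / (2 * s\<^sup>2 * n) \<partial>(std_gauss::'a measure))"
      unfolding r_def using pw[of "v \<bullet> y" for y]
      by (intro integral_mono abs_inner_integrable Bochner_Integration.integrable_add
          Bochner_Integration.integrable_diff integrable_divide i1 i2) auto
    also have "\<dots> = n / 2 + ((\<integral>y. exp (s * (v \<bullet> y)) \<partial>(std_gauss::'a measure)) + (\<integral>y. exp (- (s * (v \<bullet> y))) \<partial>(std_gauss::'a measure)) - 2) / (2 * s\<^sup>2 * n)"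
      by (simp add: i1 i2 Bochner_Integration.integrable_add Bochner_Integration.integrable_diff
          Bochner_Integration.integral_add Bochner_Integration.integral_diff SG.prob_space)
    also have "\<dots> = n / 2 + (exp ((norm (s *\<^sub>R v))\<^sup>2 / 2) + exp ((norm (-(s *\<^sub>R v)))\<^sup>2 / 2) - 2) / (2 * s\<^sup>2 * n)"
      unfolding m1 m2 by simp
    also have "\<dots> = n / 2 + (exp e - 1) * n / (2 * e)"
    proof -
      have "(norm (s *\<^sub>R v))\<^sup>2 / 2 = e" using s2 s by (simp add: n_def power_mult_distrib)
      moreover have "2 * s\<^sup>2 * n = 4 * e / n" using s2 n by (simp add: field_simps power2_eq_square)
      ultimately have "n / 2 + (exp ((norm (s *\<^sub>R v))\<^sup>2 / 2) + exp ((norm (-(s *\<^sub>R v)))\<^sup>2 / 2) - 2) / (2 * s\<^sup>2 * n)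
          = n / 2 + (exp e + exp e - 2) / (4 * e / n)" by (simp only: norm_minus_cancel)
      also have "\<dots> = n / 2 + (exp e - 1) * n / (2 * e)" using n e by (simp add: field_simps)
      finally show ?thesis .
    qed
    also have "\<dots> \<le> n / 2 + (e + e\<^sup>2) * n / (2 * e)"
      using exp_bound[of e] e n by (intro add_left_mono divide_right_mono mult_right_mono) auto
    also have "\<dots> = n + n * e / 2" using e by (simp add: field_simps power2_eq_square)
    finally show ?thesis .
  qed
  show ?thesis
  proof (rule ccontr)
    assume "\<not> ?thesis"
    then have rn: "r > n" unfolding r_def n_def by simp
    define e where "e = min 1 ((r - n) / n)"
    have e: "0 < e" "e \<le> 1" using rn n by (auto simp: e_def)
    have "n * e / 2 < r - n"
    proof -
      have "n * e \<le> r - n" using n rn by (simp add: e_def min_def field_simps split: if_splits)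
      then show ?thesis using rn by simp
    qed
    then show False using key[OF e] by simp
  qed
qed

lemma lborel_distr_uminus_eucl: "distr lborel borel uminus = (lborel :: 'a::euclidean_space measure)"
proof -
  have "(lborel :: 'a measure) = density (distr lborel borel (\<lambda>x. 0 + (-1) *\<^sub>R x)) (\<lambda>_. \<bar>-1::real\<bar> ^ DIM('a))"
    by (rule lborel_affine) simp
  then show ?thesis by (simp add: density_1)
qed

lemma nn_integral_lborel_translate:
  assumes [measurable]: "f \<in> borel_measurable (borel :: 'a::euclidean_space measure)"
  shows "(\<integral>\<^sup>+x. f (c + x) \<partial>lborel) = (\<integral>\<^sup>+x. f x \<partial>(lborel::'a measure))"
proof -
  have "(\<integral>\<^sup>+x. f x \<partial>(lborel::'a measure)) = (\<integral>\<^sup>+x. f x \<partial>distr lborel borel ((+) c))"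
    by (simp add: lborel_distr_plus)
  also have "\<dots> = (\<integral>\<^sup>+x. f (c + x) \<partial>lborel)"
    by (subst nn_integral_distr) auto
  finally show ?thesis by simp
qed

lemma nn_integral_lborel_uminus:
  assumes [measurable]: "f \<in> borel_measurable (borel :: 'a::euclidean_space measure)"
  shows "(\<integral>\<^sup>+x. f (- x) \<partial>lborel) = (\<integral>\<^sup>+x. f x \<partial>(lborel::'a measure))"
proof -
  have "(\<integral>\<^sup>+x. f x \<partial>(lborel::'a measure)) = (\<integral>\<^sup>+x. f x \<partial>distr lborel borel uminus)"
    by (simp add: lborel_distr_uminus_eucl)
  also have "\<dots> = (\<integral>\<^sup>+x. f (- x) \<partial>lborel)"
    by (subst nn_integral_distr) auto
  finally show ?thesis by simp
qed

lemma shear2: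
  fixes H :: "'a::euclidean_space \<Rightarrow> 'a \<Rightarrow> ennreal"
  assumes [measurable]: "(\<lambda>(x,y). H x y) \<in> borel_measurable (borel \<Otimes>\<^sub>M borel)"
  shows "(\<integral>\<^sup>+x. \<integral>\<^sup>+y. H x (y + a *\<^sub>R x) \<partial>lborel \<partial>lborel) = (\<integral>\<^sup>+x. \<integral>\<^sup>+y. H x y \<partial>lborel \<partial>lborel)"
proof (rule nn_integral_cong)
  fix x :: 'a
  have [measurable]: "H x \<in> borel_measurable borel" by measurable
  show "(\<integral>\<^sup>+y. H x (y + a *\<^sub>R x) \<partial>lborel) = (\<integral>\<^sup>+y. H x y \<partial>lborel)"
    using nn_integral_lborel_translate[of "H x" "a *\<^sub>R x"] by (simp add: add.commute)
qed

lemma negate2: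
  fixes H :: "'a::euclidean_space \<Rightarrow> 'a \<Rightarrow> ennreal"
  assumes [measurable]: "(\<lambda>(x,y). H x y) \<in> borel_measurable (borel \<Otimes>\<^sub>M borel)"
  shows "(\<integral>\<^sup>+x. \<integral>\<^sup>+y. H x (- y) \<partial>lborel \<partial>lborel) = (\<integral>\<^sup>+x. \<integral>\<^sup>+y. H x y \<partial>lborel \<partial>lborel)"
proof (rule nn_integral_cong)
  fix x :: 'a
  have [measurable]: "H x \<in> borel_measurable borel" by measurable
  show "(\<integral>\<^sup>+y. H x (- y) \<partial>lborel) = (\<integral>\<^sup>+y. H x y \<partial>lborel)"
    using nn_integral_lborel_uminus[of "H x"] by simp
qed

lemma shear1:
  fixes H :: "'a::euclidean_space \<Rightarrow> 'a \<Rightarrow> ennreal"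
  assumes [measurable]: "(\<lambda>(x,y). H x y) \<in> borel_measurable (borel \<Otimes>\<^sub>M borel)"
  shows "(\<integral>\<^sup>+x. \<integral>\<^sup>+y. H (x + a *\<^sub>R y) y \<partial>lborel \<partial>lborel) = (\<integral>\<^sup>+x. \<integral>\<^sup>+y. H x y \<partial>lborel \<partial>lborel)"
proof -
  have "(\<integral>\<^sup>+x. \<integral>\<^sup>+y. H (x + a *\<^sub>R y) y \<partial>lborel \<partial>lborel) = (\<integral>\<^sup>+y. \<integral>\<^sup>+x. H (x + a *\<^sub>R y) y \<partial>lborel \<partial>(lborel::'a measure))"
    by (rule lborel_pair.Fubini') measurable
  also have "\<dots> = (\<integral>\<^sup>+y. \<integral>\<^sup>+x. H x y \<partial>lborel \<partial>(lborel::'a measure))"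
  proof (rule nn_integral_cong)
    fix y :: 'a
    have [measurable]: "(\<lambda>x. H x y) \<in> borel_measurable borel" by measurable
    show "(\<integral>\<^sup>+x. H (x + a *\<^sub>R y) y \<partial>lborel) = (\<integral>\<^sup>+x. H x y \<partial>lborel)"
      using nn_integral_lborel_translate[of "\<lambda>x. H x y" "a *\<^sub>R y"] by (simp add: add.commute)
  qed
  also have "\<dots> = (\<integral>\<^sup>+x. \<integral>\<^sup>+y. H x y \<partial>lborel \<partial>lborel)"
    by (rule lborel_pair.Fubini'[symmetric]) measurable
  finally show ?thesis .
qed

lemma rot2:
  fixes H :: "'a::euclidean_space \<Rightarrow> 'a \<Rightarrow> ennreal" and c s :: real
  assumes [measurable]: "(\<lambda>(x,y). H x y) \<in> borel_measurable (borel \<Otimes>\<^sub>M borel)"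
    and cs: "c\<^sup>2 + s\<^sup>2 = 1" and c1: "1 + c \<noteq> 0"
  shows "(\<integral>\<^sup>+x. \<integral>\<^sup>+y. H (c *\<^sub>R x - s *\<^sub>R y) (s *\<^sub>R x + c *\<^sub>R y) \<partial>lborel \<partial>lborel) = (\<integral>\<^sup>+x. \<integral>\<^sup>+y. H x y \<partial>lborel \<partial>lborel)"
proof -
  define t where "t = s / (1 + c)"
  have ts: "1 - t * s = c"
  proof -
    have "t * s = s\<^sup>2 / (1 + c)" by (simp add: t_def power2_eq_square)
    also have "\<dots> = (1 - c) * (1 + c) / (1 + c)" using cs by (simp add: algebra_simps power2_eq_square)
    also have "\<dots> = 1 - c" using c1 by simp
    finally show ?thesis by simp
  qed
  have tc: "t * (1 + c) = s" using c1 by (simp add: t_def)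
  have ts2: "t + t * c = s"
    using tc by (simp add: algebra_simps)
  have eqpt: "H (c *\<^sub>R x - s *\<^sub>R y) (s *\<^sub>R x + c *\<^sub>R y) =
      H ((x + (-t) *\<^sub>R y) + (-t) *\<^sub>R (y + s *\<^sub>R (x + (-t) *\<^sub>R y))) (y + s *\<^sub>R (x + (-t) *\<^sub>R y))" for x y :: 'a
  proof -
    have "x + - t *\<^sub>R y + - t *\<^sub>R (y + s *\<^sub>R (x + - t *\<^sub>R y)) = (1 - t * s) *\<^sub>R x - (t + t * (1 - t * s)) *\<^sub>R y"
      by (simp add: algebra_simps scaleR_2 flip: scaleR_add_left)
    moreover have "y + s *\<^sub>R (x + - t *\<^sub>R y) = s *\<^sub>R x + (1 - t * s) *\<^sub>R y"
      by (simp add: algebra_simps)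
    ultimately show ?thesis
      by (simp only: ts ts2)
  qed
  define F2 where "F2 = (\<lambda>u w. H (u + (-t) *\<^sub>R w) w)"
  define F1 where "F1 = (\<lambda>u w. F2 u (w + s *\<^sub>R u))"
  have m2[measurable]: "(\<lambda>(u,w). F2 u w) \<in> borel_measurable (borel \<Otimes>\<^sub>M borel)"
    unfolding F2_def by measurable
  have m1: "(\<lambda>(u,w). F1 u w) \<in> borel_measurable (borel \<Otimes>\<^sub>M borel)"
    unfolding F1_def by measurable
  have "(\<integral>\<^sup>+x. \<integral>\<^sup>+y. H (c *\<^sub>R x - s *\<^sub>R y) (s *\<^sub>R x + c *\<^sub>R y) \<partial>lborel \<partial>lborel)
      = (\<integral>\<^sup>+x. \<integral>\<^sup>+y. F1 (x + (-t) *\<^sub>R y) y \<partial>lborel \<partial>lborel)"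
    by (simp only: eqpt F1_def F2_def)
  also have "\<dots> = (\<integral>\<^sup>+x. \<integral>\<^sup>+y. F1 x y \<partial>lborel \<partial>lborel)"
    by (rule shear1[OF m1])
  also have "\<dots> = (\<integral>\<^sup>+x. \<integral>\<^sup>+y. F2 x (y + s *\<^sub>R x) \<partial>lborel \<partial>lborel)"
    by (simp only: F1_def)
  also have "\<dots> = (\<integral>\<^sup>+x. \<integral>\<^sup>+y. F2 x y \<partial>lborel \<partial>lborel)"
    by (rule shear2[OF m2])
  also have "\<dots> = (\<integral>\<^sup>+x. \<integral>\<^sup>+y. H (x + (-t) *\<^sub>R y) y \<partial>lborel \<partial>lborel)"
    by (simp only: F2_def)
  also have "\<dots> = (\<integral>\<^sup>+x. \<integral>\<^sup>+y. H x y \<partial>lborel \<partial>lborel)"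
    by (rule shear1[OF assms(1)])
  finally show ?thesis .
qed


lemma norm_rot_sum:
  fixes x y :: "'a::euclidean_space"
  assumes cs: "c\<^sup>2 + s\<^sup>2 = 1"
  shows "(norm (c *\<^sub>R x + s *\<^sub>R y))\<^sup>2 + (norm (s *\<^sub>R x - c *\<^sub>R y))\<^sup>2 = (norm x)\<^sup>2 + (norm y)\<^sup>2"
proof -
  have "(norm (c *\<^sub>R x + s *\<^sub>R y))\<^sup>2 + (norm (s *\<^sub>R x - c *\<^sub>R y))\<^sup>2 = (c\<^sup>2 + s\<^sup>2) * (x \<bullet> x) + (c\<^sup>2 + s\<^sup>2) * (y \<bullet> y)"
    unfolding power2_norm_eq_inner by (simp add: inner_add_left inner_add_right inner_diff_left inner_diff_right
        inner_commute[of y x] algebra_simps power2_eq_square)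
  then show ?thesis using cs by (simp add: power2_norm_eq_inner)
qed

lemma gd_gd_rot:
  fixes x y :: "'a::euclidean_space"
  assumes cs: "c\<^sup>2 + s\<^sup>2 = 1"
  shows "gd (c *\<^sub>R x + s *\<^sub>R y) * gd (s *\<^sub>R x - c *\<^sub>R y) = gd x * gd y"
proof -
  have e: "gd u * gd w = ((2 * pi) powr (- real DIM('a) / 2))\<^sup>2 * exp (- ((norm u)\<^sup>2 + (norm w)\<^sup>2) / 2)" for u w :: 'a
    by (simp add: gd_def power2_eq_square exp_add[symmetric] field_simps)
  show ?thesis unfolding e norm_rot_sum[OF cs] ..
qed

lemma rot_gauss:
  fixes G :: "'a::euclidean_space \<Rightarrow> 'a \<Rightarrow> ennreal" and c s :: real
  assumes G[measurable]: "(\<lambda>(x,y). G x y) \<in> borel_measurable (borel \<Otimes>\<^sub>M borel)"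
    and cs: "c\<^sup>2 + s\<^sup>2 = 1" and c1: "1 + c \<noteq> 0"
  shows "(\<integral>\<^sup>+x. \<integral>\<^sup>+y. G (c *\<^sub>R x + s *\<^sub>R y) (s *\<^sub>R x - c *\<^sub>R y) \<partial>std_gauss \<partial>std_gauss)
       = (\<integral>\<^sup>+x. \<integral>\<^sup>+y. G x y \<partial>std_gauss \<partial>std_gauss)"
proof -
  define H where "H = (\<lambda>u w. ennreal (gd u * gd w) * G u w)"
  have H[measurable]: "(\<lambda>(x,y). H x y) \<in> borel_measurable (borel \<Otimes>\<^sub>M borel)"
    unfolding H_def by measurable
  have conv: "(\<integral>\<^sup>+x. \<integral>\<^sup>+y. F x y \<partial>std_gauss \<partial>std_gauss) = (\<integral>\<^sup>+x. \<integral>\<^sup>+y. ennreal (gd x * gd y) * F x y \<partial>lborel \<partial>lborel)"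
    if F[measurable]: "(\<lambda>(x,y). F x y) \<in> borel_measurable (borel \<Otimes>\<^sub>M borel)" for F :: "'a \<Rightarrow> 'a \<Rightarrow> ennreal"
  proof -
    have "(\<integral>\<^sup>+x. \<integral>\<^sup>+y. F x y \<partial>std_gauss \<partial>std_gauss) = (\<integral>\<^sup>+x. ennreal (gd x) * (\<integral>\<^sup>+y. F x y \<partial>std_gauss) \<partial>lborel)"
      by (rule nn_integral_std_gauss) measurable
    also have "\<dots> = (\<integral>\<^sup>+x. ennreal (gd x) * (\<integral>\<^sup>+y. ennreal (gd y) * F x y \<partial>lborel) \<partial>lborel)"
    proof (rule nn_integral_cong)
      fix x :: 'a
      have [measurable]: "F x \<in> borel_measurable borel" by measurable
      show "ennreal (gd x) * (\<integral>\<^sup>+y. F x y \<partial>std_gauss) = ennreal (gd x) * (\<integral>\<^sup>+y. ennreal (gd y) * F x y \<partial>lborel)"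
        by (subst nn_integral_std_gauss) auto
    qed
    also have "\<dots> = (\<integral>\<^sup>+x. \<integral>\<^sup>+y. ennreal (gd x * gd y) * F x y \<partial>lborel \<partial>lborel)"
      by (rule nn_integral_cong, subst nn_integral_cmult[symmetric])
         (auto simp: ennreal_mult gd_nonneg mult.assoc)
    finally show ?thesis .
  qed
  have "(\<integral>\<^sup>+x. \<integral>\<^sup>+y. G (c *\<^sub>R x + s *\<^sub>R y) (s *\<^sub>R x - c *\<^sub>R y) \<partial>std_gauss \<partial>std_gauss)
      = (\<integral>\<^sup>+x. \<integral>\<^sup>+y. ennreal (gd x * gd y) * G (c *\<^sub>R x + s *\<^sub>R y) (s *\<^sub>R x - c *\<^sub>R y) \<partial>lborel \<partial>lborel)"
    by (rule conv) measurable
  also have "\<dots> = (\<integral>\<^sup>+x. \<integral>\<^sup>+y. (\<lambda>x y. H (c *\<^sub>R x - s *\<^sub>R y) (s *\<^sub>R x + c *\<^sub>R y)) x (- y) \<partial>lborel \<partial>lborel)"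
    by (simp add: H_def gd_gd_rot[OF cs])
  also have "\<dots> = (\<integral>\<^sup>+x. \<integral>\<^sup>+y. H (c *\<^sub>R x - s *\<^sub>R y) (s *\<^sub>R x + c *\<^sub>R y) \<partial>lborel \<partial>lborel)"
    by (rule negate2) measurable
  also have "\<dots> = (\<integral>\<^sup>+x. \<integral>\<^sup>+y. H x y \<partial>lborel \<partial>lborel)"
    by (rule rot2[OF H cs c1])
  also have "\<dots> = (\<integral>\<^sup>+x. \<integral>\<^sup>+y. G x y \<partial>std_gauss \<partial>std_gauss)"
    unfolding H_def by (rule conv[symmetric]) measurable
  finally show ?thesis .
qed

lemma linear_real_grad:
  fixes D :: "'a::euclidean_space \<Rightarrow> real"
  assumes "linear D"
  shows "D w = (\<Sum>i\<in>Basis. D i *\<^sub>R i) \<bullet> w"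
proof -
  have "D w = D (\<Sum>i\<in>Basis. (w \<bullet> i) *\<^sub>R i)" by (simp only: euclidean_representation)
  also have "\<dots> = (\<Sum>i\<in>Basis. (w \<bullet> i) * D i)"
    using assms by (simp only: linear_sum linear_scale real_scaleR_def)
  also have "\<dots> = (\<Sum>i\<in>Basis. D i *\<^sub>R i) \<bullet> w"
    by (simp only: inner_sum_left inner_scaleR_left inner_commute[of w] mult.commute)
  finally show ?thesis .
qed

lemma grad_has_derivative:
  assumes "f differentiable (at x)"
  shows "(f has_derivative (\<lambda>w. grad f x \<bullet> w)) (at x)"
proof -
  have "(f has_derivative frechet_derivative f (at x)) (at x)"
    using assms by (rule frechet_derivative_works[THEN iffD1])
  moreover have "frechet_derivative f (at x) = (\<lambda>w. grad f x \<bullet> w)"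
  proof (rule ext)
    fix w
    show "frechet_derivative f (at x) w = grad f x \<bullet> w"
      unfolding grad_def by (rule linear_real_grad[OF linear_frechet_derivative[OF assms]])
  qed
  ultimately show ?thesis by simp
qed

lemma partial_limit:
  fixes f :: "'a::euclidean_space \<Rightarrow> real"
  assumes "f differentiable (at x)"
  shows "(\<lambda>n. (f (x + inverse (real (Suc n)) *\<^sub>R i) - f x) * real (Suc n)) \<longlonglongrightarrow> grad f x \<bullet> i"
proof -
  have d: "(f has_derivative (\<lambda>w. grad f x \<bullet> w)) (at x)" by (rule grad_has_derivative[OF assms])
  have "((\<lambda>h. f (x + h *\<^sub>R i)) has_derivative (\<lambda>h. grad f x \<bullet> (h *\<^sub>R i))) (at 0)"
  proof -
    have "((\<lambda>h. x + h *\<^sub>R i) has_derivative (\<lambda>h. h *\<^sub>R i)) (at 0)"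
      by (auto intro!: derivative_eq_intros)
    moreover have "(f has_derivative (\<lambda>w. grad f x \<bullet> w)) (at (x + 0 *\<^sub>R i))" using d by simp
    ultimately show ?thesis by (rule has_derivative_compose[of "\<lambda>h. x + h *\<^sub>R i"])
  qed
  then have "((\<lambda>h. f (x + h *\<^sub>R i)) has_real_derivative (grad f x \<bullet> i)) (at 0)"
    unfolding has_field_derivative_def by (rule has_derivative_eq_rhs) (auto simp: fun_eq_iff)
  then have L: "((\<lambda>h. (f (x + h *\<^sub>R i) - f x) / h) \<longlongrightarrow> grad f x \<bullet> i) (at 0)"
    by (simp add: DERIV_def)
  have F: "filterlim (\<lambda>n. inverse (real (Suc n))) (at 0) sequentially"
    by (rule filterlim_atI[OF LIMSEQ_inverse_real_of_nat]) simp
  have "(\<lambda>n. (\<lambda>h. (f (x + h *\<^sub>R i) - f x) / h) (inverse (real (Suc n)))) \<longlonglongrightarrow> grad f x \<bullet> i"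
    using filterlim_compose[OF L F] .
  then show ?thesis by (simp add: divide_inverse)
qed

lemma grad_measurable:
  fixes f :: "'a::euclidean_space \<Rightarrow> real"
  assumes diff: "\<And>x. f differentiable (at x)"
  shows "grad f \<in> borel_measurable borel"
proof -
  have cont: "continuous_on UNIV f"
    using diff by (simp add: continuous_at_imp_continuous_on differentiable_imp_continuous_within)
  then have [measurable]: "f \<in> borel_measurable borel" by (rule borel_measurable_continuous_onI)
  have comp: "(\<lambda>x. grad f x \<bullet> i) \<in> borel_measurable borel" for i :: 'a
  proof (rule borel_measurable_LIMSEQ_real[OF partial_limit[OF diff]])
    fix n :: nat
    show "(\<lambda>x. (f (x + inverse (real (Suc n)) *\<^sub>R i) - f x) * real (Suc n)) \<in> borel_measurable borel"
      by measurable
  qed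
  have "grad f = (\<lambda>x. \<Sum>i\<in>Basis. (grad f x \<bullet> i) *\<^sub>R i)"
    by (simp only: euclidean_representation)
  also have "\<dots> \<in> borel_measurable borel"
    using comp by measurable
  finally show ?thesis .
qed

definition pp :: "real \<Rightarrow> 'a::euclidean_space \<Rightarrow> 'a \<Rightarrow> 'a" where
  "pp \<theta> x y = sin \<theta> *\<^sub>R x + cos \<theta> *\<^sub>R y"
definition qq :: "real \<Rightarrow> 'a::euclidean_space \<Rightarrow> 'a \<Rightarrow> 'a" where
  "qq \<theta> x y = cos \<theta> *\<^sub>R x - sin \<theta> *\<^sub>R y"

lemma cos_borel[measurable]: "cos \<in> borel_measurable (borel::real measure)"
  by (intro borel_measurable_continuous_onI continuous_intros)
lemma sin_borel[measurable]: "sin \<in> borel_measurable (borel::real measure)"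
  by (intro borel_measurable_continuous_onI continuous_intros)

lemma norm_qq: "norm (qq \<theta> x y) \<le> norm x + norm y"
proof -
  have "norm (qq \<theta> x y) \<le> \<bar>cos \<theta>\<bar> * norm x + \<bar>sin \<theta>\<bar> * norm y"
    unfolding qq_def by (rule order_trans[OF norm_triangle_ineq4]) simp
  also have "\<dots> \<le> norm x + norm y"
    by (intro add_mono mult_left_le_one_le) auto
  finally show ?thesis .
qed

lemma pp_0[simp]: "pp 0 x y = y" and pp_pi2[simp]: "pp (pi/2) x y = x"
  by (simp_all add: pp_def)

lemma pp_deriv: "((\<lambda>\<theta>. pp \<theta> x y) has_vector_derivative qq \<theta> x y) (at \<theta>)"
  unfolding pp_def qq_def
  by (auto intro!: derivative_eq_intros simp: has_vector_derivative_def fun_eq_iff algebra_simps)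

lemma path_deriv:
  assumes "f differentiable (at (pp \<theta> x y))"
  shows "((\<lambda>\<theta>. f (pp \<theta> x y)) has_real_derivative (grad f (pp \<theta> x y) \<bullet> qq \<theta> x y)) (at \<theta>)"
proof -
  have "((\<lambda>\<theta>. f (pp \<theta> x y)) has_derivative (\<lambda>h. grad f (pp \<theta> x y) \<bullet> (h *\<^sub>R qq \<theta> x y))) (at \<theta>)"
    using pp_deriv[of x y \<theta>] grad_has_derivative[OF assms]
    unfolding has_vector_derivative_def by (rule has_derivative_compose)
  then show ?thesis
    unfolding has_field_derivative_def by (rule has_derivative_eq_rhs) (auto simp: fun_eq_iff)
qed

locale conc =
  fixes f :: "'a::euclidean_space \<Rightarrow> real" and L :: real
  assumes diff: "\<And>x. f differentiable (at x)" and Lpos: "0 < L"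
begin

lemma f_measurable[measurable]: "f \<in> borel_measurable borel"
proof -
  have "continuous_on UNIV f"
    using diff by (simp add: continuous_at_imp_continuous_on differentiable_imp_continuous_within)
  then show ?thesis by (rule borel_measurable_continuous_onI)
qed

lemma grad_meas[measurable]: "grad f \<in> borel_measurable borel"
  by (rule grad_measurable[OF diff])

definition ga :: "'a \<Rightarrow> 'a" where
  "ga z = (if (norm (grad f z))\<^sup>2 \<le> L then grad f z else 0)"
definition gb :: "'a \<Rightarrow> 'a" where
  "gb z = (if (norm (grad f z))\<^sup>2 \<le> L then 0 else grad f z)"

lemma ga_meas[measurable]: "ga \<in> borel_measurable borel"
  unfolding ga_def[abs_def] by measurable
lemma gb_meas[measurable]: "gb \<in> borel_measurable borel"
  unfolding gb_def[abs_def] by measurable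

lemma ga_gb: "grad f z = ga z + gb z"
  by (simp add: ga_def gb_def)

lemma norm_ga: "norm (ga z) \<le> sqrt L"
  using Lpos by (auto simp: ga_def real_le_rsqrt)

lemma norm_gb: "norm (gb z) = norm (grad f z) * indicator {x. (norm (grad f x))\<^sup>2 > L} z"
  by (auto simp: gb_def indicator_def)

definition Da :: "real \<Rightarrow> 'a \<Rightarrow> 'a \<Rightarrow> real" where
  "Da \<theta> x y = ga (pp \<theta> x y) \<bullet> qq \<theta> x y"
definition Db :: "real \<Rightarrow> 'a \<Rightarrow> 'a \<Rightarrow> real" where
  "Db \<theta> x y = gb (pp \<theta> x y) \<bullet> qq \<theta> x y"

lemma Da_meas[measurable (raw)]:
  assumes [measurable]: "t \<in> borel_measurable M" "u \<in> borel_measurable M" "v \<in> borel_measurable M"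
  shows "(\<lambda>\<omega>. Da (t \<omega>) (u \<omega>) (v \<omega>)) \<in> borel_measurable M"
proof -
  have [measurable]: "(\<lambda>\<omega>. cos (t \<omega>)) \<in> borel_measurable M" "(\<lambda>\<omega>. sin (t \<omega>)) \<in> borel_measurable M"
    by (rule measurable_compose[OF _ cos_borel] measurable_compose[OF _ sin_borel], simp)+
  show ?thesis unfolding Da_def pp_def qq_def by measurable
qed

lemma Db_meas[measurable (raw)]:
  assumes [measurable]: "t \<in> borel_measurable M" "u \<in> borel_measurable M" "v \<in> borel_measurable M"
  shows "(\<lambda>\<omega>. Db (t \<omega>) (u \<omega>) (v \<omega>)) \<in> borel_measurable M"
proof -
  have [measurable]: "(\<lambda>\<omega>. cos (t \<omega>)) \<in> borel_measurable M" "(\<lambda>\<omega>. sin (t \<omega>)) \<in> borel_measurable M"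
    by (rule measurable_compose[OF _ cos_borel] measurable_compose[OF _ sin_borel], simp)+
  show ?thesis unfolding Db_def pp_def qq_def by measurable
qed

lemma abs_Da: "\<bar>Da \<theta> x y\<bar> \<le> sqrt L * (norm x + norm y)"
proof -
  have "\<bar>Da \<theta> x y\<bar> \<le> norm (ga (pp \<theta> x y)) * norm (qq \<theta> x y)"
    unfolding Da_def by (rule Cauchy_Schwarz_ineq2)
  also have "\<dots> \<le> sqrt L * (norm x + norm y)"
    using Lpos by (intro mult_mono norm_ga norm_qq) auto
  finally show ?thesis .
qed

end

context conc begin

abbreviation "Th \<equiv> {0..pi/2::real}"

definition AA :: "'a \<Rightarrow> 'a \<Rightarrow> real" where
  "AA x y = (LINT \<theta>:Th|lborel. Da \<theta> x y)"

lemma Da_set_integrable: "set_integrable lborel Th (\<lambda>\<theta>. Da \<theta> x y)"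
  unfolding set_integrable_def
proof (rule Bochner_Integration.integrable_bound)
  show "integrable lborel (\<lambda>\<theta>. (sqrt L * (norm x + norm y)) * indicator Th \<theta>)"
    by (intro integrable_mult_right integrable_real_indicator) auto
  show "AE \<theta> in lborel. norm (indicator Th \<theta> *\<^sub>R Da \<theta> x y) \<le> norm ((sqrt L * (norm x + norm y)) * indicator Th \<theta>)"
    using abs_Da[of _ x y] Lpos by (auto simp: indicator_def)
qed measurable

lemma grad_path: "grad f (pp \<theta> x y) \<bullet> qq \<theta> x y = Da \<theta> x y + Db \<theta> x y"
  by (simp add: Da_def Db_def ga_gb inner_add_left)

lemma ftc:
  assumes Db_int: "set_integrable lborel Th (\<lambda>\<theta>. Db \<theta> x y)"
  shows "f x - f y = AA x y + (LINT \<theta>:Th|lborel. Db \<theta> x y)"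
proof -
  have Dint: "set_integrable lborel Th (\<lambda>\<theta>. Da \<theta> x y + Db \<theta> x y)"
    by (rule set_integral_add(1)[OF Da_set_integrable Db_int])
  have "((\<lambda>\<theta>. grad f (pp \<theta> x y) \<bullet> qq \<theta> x y) has_integral (f (pp (pi/2) x y) - f (pp 0 x y))) Th"
  proof (rule fundamental_theorem_of_calculus)
    fix \<theta> assume "\<theta> \<in> Th"
    show "((\<lambda>\<theta>. f (pp \<theta> x y)) has_vector_derivative grad f (pp \<theta> x y) \<bullet> qq \<theta> x y) (at \<theta> within Th)"
      using path_deriv[of f \<theta> x y, OF diff]
      by (simp add: has_real_derivative_iff_has_vector_derivative has_vector_derivative_at_within)
  qed simp
  then have "((\<lambda>\<theta>. Da \<theta> x y + Db \<theta> x y) has_integral (f x - f y)) Th"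
    by (simp add: grad_path)
  then have "integral Th (\<lambda>\<theta>. Da \<theta> x y + Db \<theta> x y) = f x - f y"
    by (rule integral_unique)
  moreover have "(LINT \<theta>:Th|lborel. Da \<theta> x y + Db \<theta> x y) = integral Th (\<lambda>\<theta>. Da \<theta> x y + Db \<theta> x y)"
    by (rule set_borel_integral_eq_integral(2)[OF Dint])
  moreover have "(LINT \<theta>:Th|lborel. Da \<theta> x y + Db \<theta> x y) = AA x y + (LINT \<theta>:Th|lborel. Db \<theta> x y)"
    unfolding AA_def by (rule set_integral_add(2)[OF Da_set_integrable Db_int])
  ultimately show ?thesis by simp
qed

lemma B_bound:
  "ennreal \<bar>f x - f y - AA x y\<bar> \<le> (\<integral>\<^sup>+\<theta>. ennreal \<bar>Db \<theta> x y\<bar> * indicator Th \<theta> \<partial>lborel)"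
proof (cases "(\<integral>\<^sup>+\<theta>. ennreal \<bar>Db \<theta> x y\<bar> * indicator Th \<theta> \<partial>lborel) = \<infinity>")
  case True then show ?thesis by simp
next
  case False
  have eq: "(\<integral>\<^sup>+\<theta>. ennreal (norm (indicator Th \<theta> *\<^sub>R Db \<theta> x y)) \<partial>lborel)
       = (\<integral>\<^sup>+\<theta>. ennreal \<bar>Db \<theta> x y\<bar> * indicator Th \<theta> \<partial>lborel)"
    by (rule nn_integral_cong) (auto simp: indicator_def)
  have int: "set_integrable lborel Th (\<lambda>\<theta>. Db \<theta> x y)"
    unfolding set_integrable_def
    by (rule integrableI_bounded) (use False eq in \<open>auto simp: less_top\<close>)
  have "f x - f y - AA x y = (LINT \<theta>:Th|lborel. Db \<theta> x y)"
    using ftc[OF int] by simp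
  also have "ennreal \<bar>\<dots>\<bar> \<le> (\<integral>\<^sup>+\<theta>. ennreal (norm (indicator Th \<theta> *\<^sub>R Db \<theta> x y)) \<partial>lborel)"
    using integral_norm_bound_ennreal[OF int[unfolded set_integrable_def]]
    by (simp add: set_lebesgue_integral_def)
  finally show ?thesis using eq by simp
qed

end

context conc begin

lemma measure_Th: "measure lborel Th = pi / 2" by simp

lemma bounded_set_integrable:
  fixes g :: "real \<Rightarrow> real"
  assumes [measurable]: "g \<in> borel_measurable borel" and b: "\<And>\<theta>. \<bar>g \<theta>\<bar> \<le> C"
  shows "set_integrable lborel Th g"
  unfolding set_integrable_def
proof (rule Bochner_Integration.integrable_bound)
  show "integrable lborel (\<lambda>\<theta>. C * indicator Th \<theta>)"
    by (intro integrable_mult_right integrable_real_indicator) auto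
  show "AE \<theta> in lborel. norm (indicator Th \<theta> *\<^sub>R g \<theta>) \<le> norm (C * indicator Th \<theta>)"
  proof (intro AE_I2)
    fix \<theta>
    have "\<bar>g \<theta>\<bar> \<le> \<bar>C\<bar>" using b[of \<theta>] by linarith
    then show "norm (indicator Th \<theta> *\<^sub>R g \<theta>) \<le> norm (C * indicator Th \<theta>)"
      by (auto simp: indicator_def)
  qed
qed measurable

lemma jensen_theta:
  assumes "0 < \<alpha>"
  shows "ennreal (exp (\<alpha> * AA x y)) \<le> ennreal (2/pi) * (\<integral>\<^sup>+\<theta>\<in>Th. ennreal (exp (pi/2 * \<alpha> * Da \<theta> x y)) \<partial>lborel)"
proof -
  define z where "z = (\<lambda>\<theta>. pi/2 * \<alpha> * Da \<theta> x y)"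
  define c where "c = \<alpha> * AA x y"
  define K where "K = pi/2 * \<alpha> * (sqrt L * (norm x + norm y))"
  have [measurable]: "z \<in> borel_measurable borel" unfolding z_def by measurable
  have zb: "\<bar>z \<theta>\<bar> \<le> K" for \<theta>
  proof -
    have "\<bar>z \<theta>\<bar> = pi/2 * \<alpha> * \<bar>Da \<theta> x y\<bar>" using assms by (simp add: z_def abs_mult)
    also have "\<dots> \<le> K" unfolding K_def using assms abs_Da[of \<theta> x y]
      by (intro mult_left_mono) auto
    finally show ?thesis .
  qed
  have iz: "set_integrable lborel Th (\<lambda>\<theta>. exp (z \<theta>))"
  proof (rule bounded_set_integrable[where C = "exp K"])
    fix \<theta> show "\<bar>exp (z \<theta>)\<bar> \<le> exp K" using zb[of \<theta>] by simp
  qed measurable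
  have iDa: "set_integrable lborel Th z"
    unfolding z_def by (intro set_integrable_mult_right Da_set_integrable)
  have i1: "set_integrable lborel Th (\<lambda>\<theta>. 1 - c)"
    by (rule bounded_set_integrable[where C = "\<bar>1 - c\<bar>"]) auto
  have "exp c * (pi / 2) = exp c * (LINT \<theta>:Th|lborel. (1 - c) + z \<theta>)"
  proof -
    have "(LINT \<theta>:Th|lborel. (1 - c) + z \<theta>) = (LINT \<theta>:Th|lborel. 1 - c) + (LINT \<theta>:Th|lborel. z \<theta>)"
      by (rule set_integral_add(2)[OF i1 iDa])
    also have "(LINT \<theta>:Th|lborel. 1 - c) = pi/2 * (1 - c)"
      by (subst set_integral_const) auto
    also have "(LINT \<theta>:Th|lborel. z \<theta>) = pi/2 * \<alpha> * AA x y"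
      unfolding z_def AA_def by simp
    finally show ?thesis by (simp add: c_def algebra_simps)
  qed
  also have "\<dots> = (LINT \<theta>:Th|lborel. exp c * ((1 - c) + z \<theta>))"
    by simp
  also have "\<dots> \<le> (LINT \<theta>:Th|lborel. exp (z \<theta>))"
  proof (rule set_integral_mono)
    show "set_integrable lborel Th (\<lambda>\<theta>. exp c * (1 - c + z \<theta>))"
      by (intro set_integrable_mult_right set_integral_add(1) i1 iDa)
    show "set_integrable lborel Th (\<lambda>\<theta>. exp (z \<theta>))" by (rule iz)
    fix \<theta>
    have "1 + (z \<theta> - c) \<le> exp (z \<theta> - c)" by (rule exp_ge_add_one_self)
    then have "exp c * (1 + (z \<theta> - c)) \<le> exp c * exp (z \<theta> - c)" by simp
    then show "exp c * (1 - c + z \<theta>) \<le> exp (z \<theta>)"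
      by (simp add: exp_diff algebra_simps)
  qed
  finally have le: "exp c \<le> 2 / pi * (LINT \<theta>:Th|lborel. exp (z \<theta>))"
    by (simp add: field_simps)
  have "ennreal (LINT \<theta>:Th|lborel. exp (z \<theta>)) = (\<integral>\<^sup>+\<theta>\<in>Th. ennreal (exp (z \<theta>)) \<partial>lborel)"
  proof -
    have "(\<integral>\<^sup>+\<theta>\<in>Th. ennreal (exp (z \<theta>)) \<partial>lborel) = (\<integral>\<^sup>+\<theta>. ennreal (indicator Th \<theta> *\<^sub>R exp (z \<theta>)) \<partial>lborel)"
      by (rule nn_integral_cong) (auto simp: indicator_def)
    also have "\<dots> = ennreal (LINT \<theta>:Th|lborel. exp (z \<theta>))"
      unfolding set_lebesgue_integral_def
      by (rule nn_integral_eq_integral) (use iz in \<open>auto simp: set_integrable_def\<close>)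
    finally show ?thesis by simp
  qed
  then show ?thesis
    using le unfolding c_def z_def
    by (metis ennreal_leI ennreal_mult' pi_ge_zero divide_nonneg_nonneg zero_le_numeral)
qed

end

lemma pair_SG_lborel: "pair_sigma_finite (std_gauss::'a::euclidean_space measure) (lborel::real measure)"
  unfolding pair_sigma_finite_def
  using prob_space_imp_sigma_finite[OF prob_space_std_gauss] lborel.sigma_finite_measure_axioms by simp

lemma emeasure_std_gauss_UNIV[simp]: "emeasure (std_gauss::'a::euclidean_space measure) UNIV = 1"
  using SG.emeasure_space_1 by simp

lemma swap_SG_lborel:
  fixes F :: "'a::euclidean_space \<Rightarrow> real \<Rightarrow> ennreal"
  assumes "(\<lambda>(y, \<theta>). F y \<theta>) \<in> borel_measurable (std_gauss \<Otimes>\<^sub>M lborel)"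
  shows "(\<integral>\<^sup>+y. \<integral>\<^sup>+\<theta>. F y \<theta> \<partial>lborel \<partial>std_gauss) = (\<integral>\<^sup>+\<theta>. \<integral>\<^sup>+y. F y \<theta> \<partial>std_gauss \<partial>lborel)"
  by (rule pair_sigma_finite.Fubini'[OF pair_SG_lborel assms, symmetric])

context conc begin

lemma exp_ga_rot:
  assumes "\<theta> \<in> Th"
  shows "(\<integral>\<^sup>+x. \<integral>\<^sup>+y. ennreal (exp (k * Da \<theta> x y)) \<partial>std_gauss \<partial>std_gauss)
       = (\<integral>\<^sup>+x. \<integral>\<^sup>+y. ennreal (exp (k * (ga x \<bullet> y))) \<partial>std_gauss \<partial>std_gauss)"
proof -
  have s0: "0 \<le> sin \<theta>" using assms by (intro sin_ge_zero) auto
  have "(\<integral>\<^sup>+x. \<integral>\<^sup>+y. (\<lambda>u w. ennreal (exp (k * (ga u \<bullet> w)))) (sin \<theta> *\<^sub>R x + cos \<theta> *\<^sub>R y) (cos \<theta> *\<^sub>R x - sin \<theta> *\<^sub>R y) \<partial>std_gauss \<partial>std_gauss)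
     = (\<integral>\<^sup>+x. \<integral>\<^sup>+y. (\<lambda>u w. ennreal (exp (k * (ga u \<bullet> w)))) x y \<partial>std_gauss \<partial>std_gauss)"
    by (rule rot_gauss) (use s0 in \<open>auto simp: sin_squared_eq\<close>)
  then show ?thesis by (simp add: Da_def pp_def qq_def)
qed

lemma mgf_ga: "(\<integral>\<^sup>+y. ennreal (exp (k * (ga x \<bullet> y))) \<partial>std_gauss) \<le> ennreal (exp (k\<^sup>2 * L / 2))"
proof -
  have "(\<integral>\<^sup>+y. ennreal (exp (k * (ga x \<bullet> y))) \<partial>std_gauss) = ennreal (exp ((norm (k *\<^sub>R ga x))\<^sup>2 / 2))"
    using mgf_std_gauss[of "k *\<^sub>R ga x"] by simp
  also have "\<dots> \<le> ennreal (exp (k\<^sup>2 * L / 2))"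
  proof -
    have "(norm (ga x))\<^sup>2 \<le> L" using norm_ga[of x] Lpos
      by (metis less_imp_le power_mono norm_ge_zero real_sqrt_pow2)
    then have "(norm (k *\<^sub>R ga x))\<^sup>2 \<le> k\<^sup>2 * L"
      by (simp add: power_mult_distrib mult_left_mono)
    then show ?thesis by (intro ennreal_leI) simp
  qed
  finally show ?thesis .
qed

lemma M1:
  assumes a: "0 < \<alpha>"
  shows "(\<integral>\<^sup>+x. \<integral>\<^sup>+y. ennreal (exp (\<alpha> * AA x y)) \<partial>std_gauss \<partial>std_gauss) \<le> ennreal (exp (\<alpha>\<^sup>2 * pi\<^sup>2 * L / 8))"
proof -
  define k where "k = pi/2 * \<alpha>"
  define F where "F = (\<lambda>\<theta> x y. ennreal (exp (k * Da \<theta> x y)) * indicator Th \<theta>)"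
  have Fm: "(\<lambda>(y, \<theta>). F \<theta> x y) \<in> borel_measurable (std_gauss \<Otimes>\<^sub>M lborel)" for x
    unfolding F_def by measurable
  have Fm2: "(\<lambda>(x, \<theta>). \<integral>\<^sup>+y. F \<theta> x y \<partial>std_gauss) \<in> borel_measurable (std_gauss \<Otimes>\<^sub>M lborel)"
    unfolding F_def by measurable
  have "(\<integral>\<^sup>+x. \<integral>\<^sup>+y. ennreal (exp (\<alpha> * AA x y)) \<partial>std_gauss \<partial>std_gauss)
      \<le> (\<integral>\<^sup>+x. \<integral>\<^sup>+y. ennreal (2/pi) * (\<integral>\<^sup>+\<theta>. F \<theta> x y \<partial>lborel) \<partial>std_gauss \<partial>std_gauss)"
    unfolding F_def k_def
    by (intro nn_integral_mono jensen_theta[OF a])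
  also have "\<dots> = ennreal (2/pi) * (\<integral>\<^sup>+x. \<integral>\<^sup>+y. \<integral>\<^sup>+\<theta>. F \<theta> x y \<partial>lborel \<partial>std_gauss \<partial>std_gauss)"
    unfolding F_def by (simp add: nn_integral_cmult)
  also have "(\<integral>\<^sup>+x. \<integral>\<^sup>+y. \<integral>\<^sup>+\<theta>. F \<theta> x y \<partial>lborel \<partial>std_gauss \<partial>std_gauss)
       = (\<integral>\<^sup>+x. \<integral>\<^sup>+\<theta>. \<integral>\<^sup>+y. F \<theta> x y \<partial>std_gauss \<partial>lborel \<partial>std_gauss)"
    by (intro nn_integral_cong swap_SG_lborel Fm)
  also have "\<dots> = (\<integral>\<^sup>+\<theta>. \<integral>\<^sup>+x. \<integral>\<^sup>+y. F \<theta> x y \<partial>std_gauss \<partial>std_gauss \<partial>lborel)"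
    by (rule swap_SG_lborel[OF Fm2])
  also have "\<dots> \<le> (\<integral>\<^sup>+\<theta>. ennreal (exp (k\<^sup>2 * L / 2)) * indicator Th \<theta> \<partial>lborel)"
  proof (rule nn_integral_mono)
    fix \<theta> :: real
    show "(\<integral>\<^sup>+x. \<integral>\<^sup>+y. F \<theta> x y \<partial>std_gauss \<partial>std_gauss) \<le> ennreal (exp (k\<^sup>2 * L / 2)) * indicator Th \<theta>"
    proof (cases "\<theta> \<in> Th")
      case False then show ?thesis by (simp add: F_def)
    next
      case True
      have "(\<integral>\<^sup>+x. \<integral>\<^sup>+y. F \<theta> x y \<partial>std_gauss \<partial>std_gauss) = (\<integral>\<^sup>+x. \<integral>\<^sup>+y. ennreal (exp (k * Da \<theta> x y)) \<partial>std_gauss \<partial>std_gauss)"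
        using True by (simp add: F_def)
      also have "\<dots> = (\<integral>\<^sup>+x. \<integral>\<^sup>+y. ennreal (exp (k * (ga x \<bullet> y))) \<partial>std_gauss \<partial>std_gauss)"
        by (rule exp_ga_rot[OF True])
      also have "\<dots> \<le> (\<integral>\<^sup>+x. ennreal (exp (k\<^sup>2 * L / 2)) \<partial>(std_gauss::'a measure))"
        by (rule nn_integral_mono) (rule mgf_ga)
      also have "\<dots> = ennreal (exp (k\<^sup>2 * L / 2))"
        by (simp add: SG.emeasure_space_1)
      finally show ?thesis using True by simp
    qed
  qed
  also have "\<dots> = ennreal (exp (k\<^sup>2 * L / 2)) * ennreal (pi / 2)"
    by (simp add: nn_integral_cmult_indicator)
  finally have "(\<integral>\<^sup>+x. \<integral>\<^sup>+y. ennreal (exp (\<alpha> * AA x y)) \<partial>std_gauss \<partial>std_gauss)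
     \<le> ennreal (2/pi) * (ennreal (exp (k\<^sup>2 * L / 2)) * ennreal (pi / 2))"
    by (simp add: mult_left_mono)
  also have "\<dots> = ennreal (exp (k\<^sup>2 * L / 2))"
    by (simp add: ennreal_mult'[symmetric] field_simps)
  also have "k\<^sup>2 * L / 2 = \<alpha>\<^sup>2 * pi\<^sup>2 * L / 8"
    by (simp add: k_def power_mult_distrib power_divide)
  finally show ?thesis .
qed

end

lemma amgm_inf:
  fixes r P E :: real
  assumes h: "\<And>l. 0 < l \<Longrightarrow> r \<le> (l * P + E / l) / 2" and P: "0 \<le> P" and E: "0 \<le> E"
  shows "r \<le> sqrt (P * E)"
proof (cases "P = 0 \<or> E = 0")
  case True
  show ?thesis
  proof (rule ccontr)
    assume "\<not> ?thesis"
    then have r: "r > 0" using True by auto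
    show False
    proof (cases "P = 0")
      case True
      have pos: "0 < E / r + 1" using r E by (simp add: add_nonneg_pos)
      define t where "t = E / (E / r + 1)"
      have "r \<le> t / 2" using h[OF pos] True by (simp add: t_def)
      moreover have "t < r" unfolding t_def using r E by (simp add: field_simps add_pos_nonneg)
      moreover have "0 \<le> t" unfolding t_def using pos E by simp
      ultimately show False by linarith
    next
      case False
      then have E0: "E = 0" using \<open>P = 0 \<or> E = 0\<close> by simp
      have Pp: "P > 0" using False P by simp
      have "r \<le> (r / P) * P / 2" using h[of "r / P"] E0 r Pp by simp
      also have "\<dots> < r" using Pp r by simp
      finally show False by simp
    qed
  qed
next
  case False
  then have Pp: "P > 0" and Ep: "E > 0" using P E by auto
  define l where "l = sqrt (E / P)"
  have l: "0 < l" using Pp Ep by (simp add: l_def)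
  have "l * P = sqrt (P * E)"
  proof -
    have "l * P = sqrt (E / P) * sqrt (P\<^sup>2)" using Pp by (simp add: l_def)
    also have "\<dots> = sqrt (E / P * P\<^sup>2)" by (simp only: real_sqrt_mult)
    also have "E / P * P\<^sup>2 = P * E" using Pp by (simp add: power2_eq_square)
    finally show ?thesis .
  qed
  moreover have "E / l = sqrt (P * E)"
  proof -
    have "E / l = sqrt (E\<^sup>2) / sqrt (E / P)" using Ep by (simp add: l_def)
    also have "\<dots> = sqrt (E\<^sup>2 / (E / P))" by (simp only: real_sqrt_divide)
    also have "E\<^sup>2 / (E / P) = P * E" using Ep Pp by (simp add: power2_eq_square field_simps)
    finally show ?thesis .
  qed
  ultimately show ?thesis using h[OF l] by simp
qed

lemma emeasure_SG_lt_top[simp]: "emeasure (std_gauss::'a::euclidean_space measure) A < \<top>"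
  using SG.emeasure_finite[of A] by (simp add: less_top[symmetric])

locale conc2 = conc +
  assumes int_f: "integrable std_gauss f"
    and int_grad: "integrable std_gauss (\<lambda>x. (norm (grad f x))\<^sup>2)"
begin

abbreviation "EG \<equiv> (\<integral>x. (norm (grad f x))\<^sup>2 \<partial>std_gauss)"
abbreviation "GL \<equiv> {x. (norm (grad f x))\<^sup>2 > L}"

lemma GL_sets[measurable]: "GL \<in> sets borel" by measurable

lemma Psi_eq: "Psi f L = measure std_gauss GL" by (simp add: Psi_def)

lemma CS_gb: "(\<integral>\<^sup>+x. ennreal (norm (gb x)) \<partial>std_gauss) \<le> ennreal (sqrt (Psi f L * EG))"
proof -
  have pw: "norm (gb x) \<le> (l * indicator GL x + (norm (grad f x))\<^sup>2 / l) / 2" if l: "0 < l" for l x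
  proof (cases "x \<in> GL")
    case True
    have "0 \<le> (sqrt l - norm (grad f x) / sqrt l)\<^sup>2" by simp
    also have "\<dots> = l - 2 * norm (grad f x) + (norm (grad f x))\<^sup>2 / l"
      using l by (simp add: power2_diff power_divide field_simps power2_eq_square)
    finally show ?thesis using True by (simp add: norm_gb)
  next
    case False then show ?thesis using l by (simp add: norm_gb)
  qed
  have maj: "integrable std_gauss (\<lambda>x. (l * indicator GL x + (norm (grad f x))\<^sup>2 / l) / 2)" for l
    by (intro integrable_divide Bochner_Integration.integrable_add integrable_mult_right int_grad
        integrable_real_indicator) auto
  have ig: "integrable std_gauss (\<lambda>x. norm (gb x))"
    by (rule Bochner_Integration.integrable_bound[OF maj[of 1]]) (use pw[of 1] in auto)
  have bound: "(\<integral>x. norm (gb x) \<partial>std_gauss) \<le> (l * Psi f L + EG / l) / 2" if l: "0 < l" for l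
  proof -
    have "(\<integral>x. norm (gb x) \<partial>std_gauss) \<le> (\<integral>x. (l * indicator GL x + (norm (grad f x))\<^sup>2 / l) / 2 \<partial>std_gauss)"
      by (rule integral_mono[OF ig maj]) (rule pw[OF l])
    also have "\<dots> = (l * Psi f L + EG / l) / 2"
      using int_grad by (simp add: Psi_eq Bochner_Integration.integral_add integrable_real_indicator)
    finally show ?thesis .
  qed
  have EG0: "0 \<le> EG" by (rule integral_nonneg_AE) auto
  have "(\<integral>x. norm (gb x) \<partial>std_gauss) \<le> sqrt (Psi f L * EG)"
    by (rule amgm_inf[OF bound]) (auto simp: Psi_def EG0)
  moreover have "(\<integral>\<^sup>+x. ennreal (norm (gb x)) \<partial>std_gauss) = ennreal (\<integral>x. norm (gb x) \<partial>std_gauss)"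
    by (rule nn_integral_eq_integral[OF ig]) auto
  ultimately show ?thesis by (simp add: ennreal_leI)
qed

end

lemma abs_inner_nn_le: "(\<integral>\<^sup>+y. ennreal \<bar>v \<bullet> y\<bar> \<partial>(std_gauss::'a::euclidean_space measure)) \<le> ennreal (norm v)"
proof -
  have "(\<integral>\<^sup>+y. ennreal \<bar>v \<bullet> y\<bar> \<partial>(std_gauss::'a measure)) = ennreal (\<integral>y. \<bar>v \<bullet> y\<bar> \<partial>std_gauss)"
    by (rule nn_integral_eq_integral[OF abs_inner_integrable]) auto
  also have "\<dots> \<le> ennreal (norm v)" by (rule ennreal_leI[OF abs_inner_integral_le])
  finally show ?thesis .
qed

lemma rot_Th:
  fixes G :: "'a::euclidean_space \<Rightarrow> 'a \<Rightarrow> ennreal"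
  assumes "\<theta> \<in> {0..pi/2}" and G: "(\<lambda>(x,y). G x y) \<in> borel_measurable (borel \<Otimes>\<^sub>M borel)"
  shows "(\<integral>\<^sup>+x. \<integral>\<^sup>+y. G (pp \<theta> x y) (qq \<theta> x y) \<partial>std_gauss \<partial>std_gauss)
       = (\<integral>\<^sup>+x. \<integral>\<^sup>+y. G x y \<partial>std_gauss \<partial>std_gauss)"
proof -
  have s0: "0 \<le> sin \<theta>" using assms by (intro sin_ge_zero) auto
  show ?thesis unfolding pp_def qq_def
    by (rule rot_gauss[OF G]) (use s0 in \<open>auto simp: sin_squared_eq\<close>)
qed

context conc2 begin

lemma M2:
  "(\<integral>\<^sup>+x. \<integral>\<^sup>+y. ennreal \<bar>f x - f y - AA x y\<bar> \<partial>std_gauss \<partial>std_gauss) \<le> ennreal (pi/2 * sqrt (Psi f L * EG))"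
proof -
  define F where "F = (\<lambda>\<theta> x y. ennreal \<bar>Db \<theta> x y\<bar> * indicator Th \<theta>)"
  have Fm: "(\<lambda>(y, \<theta>). F \<theta> x y) \<in> borel_measurable (std_gauss \<Otimes>\<^sub>M lborel)" for x
    unfolding F_def by measurable
  have Fm2: "(\<lambda>(x, \<theta>). \<integral>\<^sup>+y. F \<theta> x y \<partial>std_gauss) \<in> borel_measurable (std_gauss \<Otimes>\<^sub>M lborel)"
    unfolding F_def by measurable
  have "(\<integral>\<^sup>+x. \<integral>\<^sup>+y. ennreal \<bar>f x - f y - AA x y\<bar> \<partial>std_gauss \<partial>std_gauss)
      \<le> (\<integral>\<^sup>+x. \<integral>\<^sup>+y. \<integral>\<^sup>+\<theta>. F \<theta> x y \<partial>lborel \<partial>std_gauss \<partial>std_gauss)"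
    unfolding F_def by (intro nn_integral_mono B_bound)
  also have "\<dots> = (\<integral>\<^sup>+x. \<integral>\<^sup>+\<theta>. \<integral>\<^sup>+y. F \<theta> x y \<partial>std_gauss \<partial>lborel \<partial>std_gauss)"
    by (intro nn_integral_cong swap_SG_lborel Fm)
  also have "\<dots> = (\<integral>\<^sup>+\<theta>. \<integral>\<^sup>+x. \<integral>\<^sup>+y. F \<theta> x y \<partial>std_gauss \<partial>std_gauss \<partial>lborel)"
    by (rule swap_SG_lborel[OF Fm2])
  also have "\<dots> \<le> (\<integral>\<^sup>+\<theta>. ennreal (sqrt (Psi f L * EG)) * indicator Th \<theta> \<partial>lborel)"
  proof (rule nn_integral_mono)
    fix \<theta> :: real
    show "(\<integral>\<^sup>+x. \<integral>\<^sup>+y. F \<theta> x y \<partial>std_gauss \<partial>std_gauss) \<le> ennreal (sqrt (Psi f L * EG)) * indicator Th \<theta>"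
    proof (cases "\<theta> \<in> Th")
      case False then show ?thesis by (simp add: F_def)
    next
      case True
      have "(\<integral>\<^sup>+x. \<integral>\<^sup>+y. F \<theta> x y \<partial>std_gauss \<partial>std_gauss)
          = (\<integral>\<^sup>+x. \<integral>\<^sup>+y. (\<lambda>u w. ennreal \<bar>gb u \<bullet> w\<bar>) (pp \<theta> x y) (qq \<theta> x y) \<partial>std_gauss \<partial>std_gauss)"
        using True by (simp add: F_def Db_def)
      also have "\<dots> = (\<integral>\<^sup>+x. \<integral>\<^sup>+y. ennreal \<bar>gb x \<bullet> y\<bar> \<partial>std_gauss \<partial>std_gauss)"
        by (rule rot_Th[OF True]) measurable
      also have "\<dots> \<le> (\<integral>\<^sup>+x. ennreal (norm (gb x)) \<partial>std_gauss)"
        by (rule nn_integral_mono) (rule abs_inner_nn_le)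
      also have "\<dots> \<le> ennreal (sqrt (Psi f L * EG))" by (rule CS_gb)
      finally show ?thesis using True by simp
    qed
  qed
  also have "\<dots> = ennreal (sqrt (Psi f L * EG)) * ennreal (pi / 2)"
    by (simp add: nn_integral_cmult_indicator)
  also have "\<dots> = ennreal (pi/2 * sqrt (Psi f L * EG))"
    by (simp add: ennreal_mult'[symmetric] mult.commute)
  finally show ?thesis .
qed

end

lemma elem_bound:
  fixes a b s t \<alpha> :: real
  assumes a: "0 < \<alpha>" and s: "0 \<le> s"
  shows "min 1 (exp (\<alpha> * (a + b - t))) \<le> exp (\<alpha> * (a + s - t)) + \<bar>b\<bar> / (s + 1 / \<alpha>)"
proof -
  have sp: "0 < s + 1 / \<alpha>" using a s by (simp add: add_nonneg_pos)
  consider "b \<le> s" | "s + 1/\<alpha> \<le> \<bar>b\<bar>" | "s < b" "b < s + 1/\<alpha>" by linarith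
  then show ?thesis
  proof cases
    case 1
    have "min 1 (exp (\<alpha> * (a + b - t))) \<le> exp (\<alpha> * (a + b - t))" by simp
    also have "\<dots> \<le> exp (\<alpha> * (a + s - t))" using 1 a by (simp add: mult_left_mono)
    finally show ?thesis using sp by (simp add: add_increasing2)
  next
    case 2
    then have "1 \<le> \<bar>b\<bar> / (s + 1 / \<alpha>)" using sp by simp
    then show ?thesis by (smt (verit) exp_gt_zero min.cobounded1)
  next
    case 3
    define u where "u = exp (\<alpha> * (a + s - t))"
    define d where "d = \<alpha> * (b - s)"
    have d0: "0 < d" using 3 a by (simp add: d_def)
    have d1: "d < 1" using 3 a by (simp add: d_def field_simps)
    have u0: "0 < u" by (simp add: u_def)
    have eq: "exp (\<alpha> * (a + b - t)) = u * exp d"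
      by (simp add: u_def d_def exp_add[symmetric] algebra_simps)
    have m: "min 1 (u * exp d) \<le> u + d"
    proof (cases "u * exp d \<le> 1")
      case True
      then have ue: "u \<le> exp (- d)" by (simp add: exp_minus field_simps)
      have "u * exp d - u = u * (exp d - 1)" by (simp add: algebra_simps)
      also have "\<dots> \<le> exp (- d) * (exp d - 1)" using ue d0 by (intro mult_right_mono) auto
      also have "\<dots> = 1 - exp (- d)" by (simp add: algebra_simps exp_minus)
      also have "\<dots> \<le> d" using exp_ge_add_one_self[of "- d"] by simp
      finally show ?thesis by simp
    next
      case False
      then have "exp (- d) < u" by (simp add: exp_minus field_simps)
      moreover have "1 - d \<le> exp (- d)" using exp_ge_add_one_self[of "- d"] by simp
      ultimately show ?thesis by simp
    qed
    have "d \<le> \<bar>b\<bar> / (s + 1 / \<alpha>)"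
    proof -
      have "d * (s + 1 / \<alpha>) = \<alpha> * s * (b - s) + (b - s)" using a by (simp add: d_def field_simps)
      also have "\<dots> \<le> s + (b - s)"
      proof -
        have "\<alpha> * (b - s) \<le> 1" using d1 by (simp add: d_def)
        then have "s * (\<alpha> * (b - s)) \<le> s * 1" using s by (intro mult_left_mono)
        then show ?thesis by (simp add: algebra_simps)
      qed
      also have "\<dots> = \<bar>b\<bar>" using 3 s by simp
      finally show ?thesis using sp by (simp add: field_simps)
    qed
    then show ?thesis using m eq by (simp add: u_def)
  qed
qed

context conc2 begin

abbreviation "m \<equiv> (\<integral>y. f y \<partial>std_gauss)"

lemma AA_meas[measurable (raw)]:
  assumes [measurable]: "u \<in> borel_measurable M" "v \<in> borel_measurable M"
  shows "(\<lambda>\<omega>. AA (u \<omega>) (v \<omega>)) \<in> borel_measurable M"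
  unfolding AA_def set_lebesgue_integral_def by measurable


lemma abs_AA: "\<bar>AA x y\<bar> \<le> pi/2 * (sqrt L * (norm x + norm y))"
proof -
  define C where "C = sqrt L * (norm x + norm y)"
  have "\<bar>AA x y\<bar> = norm (\<integral>\<theta>. indicator Th \<theta> *\<^sub>R Da \<theta> x y \<partial>lborel)"
    by (simp add: AA_def set_lebesgue_integral_def)
  also have "\<dots> \<le> (\<integral>\<theta>. norm (indicator Th \<theta> *\<^sub>R Da \<theta> x y) \<partial>lborel)"
    by (rule integral_norm_bound)
  also have "\<dots> \<le> (\<integral>\<theta>. C * indicator Th \<theta> \<partial>lborel)"
  proof (rule integral_mono)
    show "integrable lborel (\<lambda>\<theta>. norm (indicator Th \<theta> *\<^sub>R Da \<theta> x y))"
      using Da_set_integrable[of x y] unfolding set_integrable_def by (rule integrable_norm)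
    show "integrable lborel (\<lambda>\<theta>. C * indicator Th \<theta>)"
      by (intro integrable_mult_right integrable_real_indicator) auto
    fix \<theta> show "norm (indicator Th \<theta> *\<^sub>R Da \<theta> x y) \<le> C * indicator Th \<theta>"
      using abs_Da[of \<theta> x y] by (auto simp: C_def indicator_def)
  qed
  also have "\<dots> = C * (pi / 2)" by simp
  finally show ?thesis by (simp add: C_def mult.commute)
qed

lemma norm_integrable: "integrable (std_gauss::'a measure) (\<lambda>y. norm y)"
proof (rule Bochner_Integration.integrable_bound)
  show "integrable std_gauss (\<lambda>y. \<Sum>b\<in>Basis. \<bar>b \<bullet> (y::'a)\<bar>)"
    by (rule Bochner_Integration.integrable_sum) (rule abs_inner_integrable)
  show "AE y in std_gauss. norm (norm y) \<le> norm (\<Sum>b\<in>Basis. \<bar>b \<bullet> (y::'a)\<bar>)"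
    using norm_le_l1 by (auto simp: inner_commute intro!: AE_I2 order_trans[OF _ abs_ge_self])
qed simp

lemma AA_integrable: "integrable std_gauss (\<lambda>y. AA x y)"
proof (rule Bochner_Integration.integrable_bound)
  show "integrable std_gauss (\<lambda>y::'a. pi/2 * (sqrt L * (norm x + norm y)))"
    by (intro integrable_mult_right Bochner_Integration.integrable_add norm_integrable) (auto intro: norm_integrable)
  show "AE y in std_gauss. norm (AA x y) \<le> norm (pi/2 * (sqrt L * (norm x + norm y)))"
    using abs_AA[of x] Lpos by (auto intro!: AE_I2 order_trans[OF _ abs_ge_self])
qed measurable

lemma jensen_y:
  assumes a: "0 < \<alpha>"
  shows "ennreal (exp (\<alpha> * (\<integral>y. AA x y \<partial>std_gauss))) \<le> (\<integral>\<^sup>+y. ennreal (exp (\<alpha> * AA x y)) \<partial>std_gauss)"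
proof (cases "integrable std_gauss (\<lambda>y. exp (\<alpha> * AA x y))")
  case False
  have "(\<integral>\<^sup>+y. ennreal (exp (\<alpha> * AA x y)) \<partial>std_gauss) = \<infinity>"
  proof (rule ccontr)
    assume "(\<integral>\<^sup>+y. ennreal (exp (\<alpha> * AA x y)) \<partial>std_gauss) \<noteq> \<infinity>"
    then have "integrable std_gauss (\<lambda>y. exp (\<alpha> * AA x y))"
      by (intro integrableI_nonneg) (auto simp: less_top)
    with False show False by simp
  qed
  then show ?thesis by simp
next
  case True
  define c where "c = \<alpha> * (\<integral>y. AA x y \<partial>std_gauss)"
  have "exp c = (\<integral>y. exp c * (1 + (\<alpha> * AA x y - c)) \<partial>std_gauss)"
    using AA_integrable[of x] by (simp add: c_def Bochner_Integration.integral_add Bochner_Integration.integral_diff)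
  also have "\<dots> \<le> (\<integral>y. exp (\<alpha> * AA x y) \<partial>std_gauss)"
  proof (rule integral_mono[OF _ True])
    show "integrable std_gauss (\<lambda>y. exp c * (1 + (\<alpha> * AA x y - c)))"
      using AA_integrable[of x] by simp
    fix y
    have "exp c * (1 + (\<alpha> * AA x y - c)) \<le> exp c * exp (\<alpha> * AA x y - c)"
      by (intro mult_left_mono exp_ge_add_one_self) simp
    then show "exp c * (1 + (\<alpha> * AA x y - c)) \<le> exp (\<alpha> * AA x y)"
      by (simp add: exp_diff)
  qed
  also have "ennreal \<dots> = (\<integral>\<^sup>+y. ennreal (exp (\<alpha> * AA x y)) \<partial>std_gauss)"
    by (rule nn_integral_eq_integral[OF True, symmetric]) auto
  finally show ?thesis unfolding c_def by (simp add: ennreal_leI)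
qed

lemma Bp_integrable: "integrable std_gauss (\<lambda>y. f x - f y - AA x y)"
  using int_f AA_integrable[of x] by simp

lemma decomp: "f x - m = (\<integral>y. AA x y \<partial>std_gauss) + (\<integral>y. f x - f y - AA x y \<partial>std_gauss)"
  using int_f AA_integrable[of x]
  by (simp add: Bochner_Integration.integral_diff)

lemma Bp_abs: "ennreal \<bar>\<integral>y. f x - f y - AA x y \<partial>std_gauss\<bar> \<le> (\<integral>\<^sup>+y. ennreal \<bar>f x - f y - AA x y\<bar> \<partial>std_gauss)"
  using integral_norm_bound_ennreal[OF Bp_integrable[of x]] by simp

end

context conc2 begin

lemma core:
  assumes a: "0 < \<alpha>" and s: "0 \<le> s"
  shows "(\<integral>\<^sup>+x. ennreal (min 1 (exp (\<alpha> * (f x - m - t)))) \<partial>std_gauss)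
    \<le> ennreal (exp (\<alpha>\<^sup>2 * pi\<^sup>2 * L / 8 + \<alpha> * (s - t))) + ennreal (pi/2 * sqrt (Psi f L * EG) / (s + 1/\<alpha>))"
proof -
  define c where "c = s + 1/\<alpha>"
  have c: "0 < c" using a s by (simp add: c_def add_nonneg_pos)
  define K1 where "K1 = ennreal (exp (\<alpha> * (s - t)))"
  define K2 where "K2 = ennreal (1 / c)"
  define I1 where "I1 = (\<lambda>x. \<integral>\<^sup>+y. ennreal (exp (\<alpha> * AA x y)) \<partial>std_gauss)"
  define I2 where "I2 = (\<lambda>x. \<integral>\<^sup>+y. ennreal \<bar>f x - f y - AA x y\<bar> \<partial>std_gauss)"
  have I1m[measurable]: "I1 \<in> borel_measurable std_gauss" unfolding I1_def by measurable
  have I2m[measurable]: "I2 \<in> borel_measurable std_gauss" unfolding I2_def by measurable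
  have pw: "ennreal (min 1 (exp (\<alpha> * (f x - m - t)))) \<le> K1 * I1 x + K2 * I2 x" for x
  proof -
    define A' where "A' = (\<integral>y. AA x y \<partial>std_gauss)"
    define B' where "B' = (\<integral>y. f x - f y - AA x y \<partial>std_gauss)"
    have "f x - m = A' + B'" unfolding A'_def B'_def by (rule decomp)
    then have "min 1 (exp (\<alpha> * (f x - m - t))) \<le> exp (\<alpha> * (A' + s - t)) + \<bar>B'\<bar> / c"
      using elem_bound[OF a s, of A' B' t] by (simp add: c_def)
    also have "\<dots> = exp (\<alpha> * (s - t)) * exp (\<alpha> * A') + 1 / c * \<bar>B'\<bar>"
      by (simp add: exp_add[symmetric] algebra_simps)
    finally have "ennreal (min 1 (exp (\<alpha> * (f x - m - t)))) \<le>
        ennreal (exp (\<alpha> * (s - t)) * exp (\<alpha> * A') + 1 / c * \<bar>B'\<bar>)"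
      by (rule ennreal_leI)
    also have "\<dots> = K1 * ennreal (exp (\<alpha> * A')) + K2 * ennreal \<bar>B'\<bar>"
      using c by (subst ennreal_plus) (simp_all add: K1_def K2_def ennreal_mult'[symmetric])
    also have "\<dots> \<le> K1 * I1 x + K2 * I2 x"
      unfolding I1_def I2_def A'_def B'_def
      by (intro add_mono mult_left_mono jensen_y[OF a] Bp_abs) auto
    finally show ?thesis .
  qed
  have "(\<integral>\<^sup>+x. ennreal (min 1 (exp (\<alpha> * (f x - m - t)))) \<partial>std_gauss) \<le> (\<integral>\<^sup>+x. K1 * I1 x + K2 * I2 x \<partial>std_gauss)"
    by (rule nn_integral_mono) (rule pw)
  also have "\<dots> = K1 * (\<integral>\<^sup>+x. I1 x \<partial>std_gauss) + K2 * (\<integral>\<^sup>+x. I2 x \<partial>std_gauss)"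
    by (simp add: nn_integral_add nn_integral_cmult)
  also have "\<dots> \<le> K1 * ennreal (exp (\<alpha>\<^sup>2 * pi\<^sup>2 * L / 8)) + K2 * ennreal (pi/2 * sqrt (Psi f L * EG))"
    unfolding I1_def I2_def by (intro add_mono mult_left_mono M1[OF a] M2) auto
  also have "\<dots> = ennreal (exp (\<alpha>\<^sup>2 * pi\<^sup>2 * L / 8 + \<alpha> * (s - t))) + ennreal (pi/2 * sqrt (Psi f L * EG) / (s + 1/\<alpha>))"
    using c by (simp add: K1_def K2_def ennreal_mult'[symmetric] exp_add c_def mult.commute)
  finally show ?thesis .
qed

end

lemma grad_uminus:
  assumes "f differentiable (at x)"
  shows "grad (\<lambda>x. - f x) x = - grad f x"
proof -
  have d: "((\<lambda>x. - f x) has_derivative (\<lambda>w. (- grad f x) \<bullet> w)) (at x)"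
    using has_derivative_minus[OF grad_has_derivative[OF assms]] by simp
  have fd: "frechet_derivative (\<lambda>x. - f x) (at x) = (\<lambda>w. (- grad f x) \<bullet> w)"
    using frechet_derivative_at[OF d] by simp
  show ?thesis
    unfolding grad_def[of "\<lambda>x. - f x"] fd
    by (rule euclidean_representation)
qed

context conc2 begin

lemma EG0: "0 \<le> EG" by (rule integral_nonneg_AE) auto
lemma Psi0: "0 \<le> Psi f L" by (simp add: Psi_def)

lemma tail:
  assumes a: "0 < \<alpha>" and s: "0 \<le> s"
  shows "measure std_gauss {x. f x - m > t}
    \<le> exp (\<alpha>\<^sup>2 * pi\<^sup>2 * L / 8 + \<alpha> * (s - t)) + pi/2 * sqrt (Psi f L * EG) / (s + 1/\<alpha>)"
proof -
  have "emeasure std_gauss {x. f x - m > t} = (\<integral>\<^sup>+x. indicator {x. f x - m > t} x \<partial>std_gauss)"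
    by (subst nn_integral_indicator) auto
  also have "\<dots> \<le> (\<integral>\<^sup>+x. ennreal (min 1 (exp (\<alpha> * (f x - m - t)))) \<partial>std_gauss)"
  proof (rule nn_integral_mono)
    fix x
    show "indicator {x. f x - m > t} x \<le> ennreal (min 1 (exp (\<alpha> * (f x - m - t))))"
    proof (cases "f x - m > t")
      case True
      then have "1 \<le> exp (\<alpha> * (f x - m - t))" using a by simp
      then show ?thesis using True by simp
    qed simp
  qed
  also have "\<dots> \<le> ennreal (exp (\<alpha>\<^sup>2 * pi\<^sup>2 * L / 8 + \<alpha> * (s - t)) + pi/2 * sqrt (Psi f L * EG) / (s + 1/\<alpha>))"
  proof -
    have "0 \<le> pi/2 * sqrt (Psi f L * EG) / (s + 1/\<alpha>)" using a s EG0 Psi0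
      by (intro divide_nonneg_pos) (auto simp: add_nonneg_pos)
    then show ?thesis using core[OF a s, of t] by (subst ennreal_plus) auto
  qed
  finally have le: "ennreal (measure std_gauss {x. f x - m > t}) \<le> ennreal (exp (\<alpha>\<^sup>2 * pi\<^sup>2 * L / 8 + \<alpha> * (s - t)) + pi/2 * sqrt (Psi f L * EG) / (s + 1/\<alpha>))"
    by (simp only: SG.emeasure_eq_measure)
  have R0: "0 \<le> exp (\<alpha>\<^sup>2 * pi\<^sup>2 * L / 8 + \<alpha> * (s - t)) + pi/2 * sqrt (Psi f L * EG) / (s + 1/\<alpha>)"
    using a s EG0 Psi0 by (intro add_nonneg_nonneg divide_nonneg_pos) (auto simp: add_nonneg_pos)
  show ?thesis using le ennreal_le_iff[OF R0] by blast
qed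

lemma tail_Delta:
  assumes a: "0 < \<alpha>"
  shows "measure std_gauss {x. f x - m > t} \<le> Delta f L \<alpha> t"
proof -
  have "measure std_gauss {x. f x - m > t} \<le> exp (\<alpha>\<^sup>2 * pi\<^sup>2 * L / 8 + \<alpha> * (0 - t)) + pi/2 * sqrt (Psi f L * EG) / (0 + 1/\<alpha>)"
    by (rule tail[OF a]) simp
  also have "\<dots> \<le> Delta f L \<alpha> t"
  proof -
    have "\<alpha>\<^sup>2 * pi\<^sup>2 * L / 8 + \<alpha> * (0 - t) \<le> \<alpha>\<^sup>2 * pi\<^sup>2 * L / 4 - \<alpha> * t"
      using Lpos by simp
    then have "exp (\<alpha>\<^sup>2 * pi\<^sup>2 * L / 8 + \<alpha> * (0 - t)) \<le> exp (\<alpha>\<^sup>2 * pi\<^sup>2 * L / 4 - \<alpha> * t)"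
      by simp
    moreover have "pi/2 * sqrt (Psi f L * EG) / (0 + 1/\<alpha>) = pi * \<alpha> / 2 * sqrt (Psi f L * EG)"
      by simp
    ultimately show ?thesis using Psi0 unfolding Delta_def by linarith
  qed
  finally show ?thesis .
qed

end

context conc2 begin

lemma claim1:
  assumes a: "0 < \<alpha>"
  shows "(\<integral>x. min (exp (\<alpha> * (f x - m))) (exp (\<alpha> * t)) \<partial>std_gauss) \<le> exp (\<alpha> * t) * Delta f L \<alpha> t"
proof -
  define g where "g = (\<lambda>x. min 1 (exp (\<alpha> * (f x - m - t))))"
  have eq: "min (exp (\<alpha> * (f x - m))) (exp (\<alpha> * t)) = exp (\<alpha> * t) * g x" for x
  proof -
    have "exp (\<alpha> * (f x - m)) = exp (\<alpha> * t) * exp (\<alpha> * (f x - m - t))"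
      by (simp add: exp_add[symmetric] algebra_simps)
    then show ?thesis unfolding g_def by (simp add: min_def)
  qed
  have gi: "integrable std_gauss g"
    by (rule SG.integrable_const_bound[where B = 1]) (auto simp: g_def)
  have R0: "0 \<le> exp (\<alpha>\<^sup>2 * pi\<^sup>2 * L / 8 + \<alpha> * (0 - t)) + pi/2 * sqrt (Psi f L * EG) / (0 + 1/\<alpha>)"
    using a EG0 Psi0 by (intro add_nonneg_nonneg divide_nonneg_pos) auto
  have "ennreal (\<integral>x. g x \<partial>std_gauss) = (\<integral>\<^sup>+x. ennreal (g x) \<partial>std_gauss)"
    by (rule nn_integral_eq_integral[symmetric, OF gi]) (auto simp: g_def)
  also have "\<dots> \<le> ennreal (exp (\<alpha>\<^sup>2 * pi\<^sup>2 * L / 8 + \<alpha> * (0 - t))) + ennreal (pi/2 * sqrt (Psi f L * EG) / (0 + 1/\<alpha>))"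
    unfolding g_def by (rule core[OF a]) simp
  also have "\<dots> = ennreal (exp (\<alpha>\<^sup>2 * pi\<^sup>2 * L / 8 + \<alpha> * (0 - t)) + pi/2 * sqrt (Psi f L * EG) / (0 + 1/\<alpha>))"
    using a EG0 Psi0 by (subst ennreal_plus) auto
  finally have le: "(\<integral>x. g x \<partial>std_gauss) \<le> exp (\<alpha>\<^sup>2 * pi\<^sup>2 * L / 8 + \<alpha> * (0 - t)) + pi/2 * sqrt (Psi f L * EG) / (0 + 1/\<alpha>)"
    using ennreal_le_iff[OF R0] by blast
  also have "\<dots> \<le> Delta f L \<alpha> t"
  proof -
    have "\<alpha>\<^sup>2 * pi\<^sup>2 * L / 8 + \<alpha> * (0 - t) \<le> \<alpha>\<^sup>2 * pi\<^sup>2 * L / 4 - \<alpha> * t"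
      using Lpos by simp
    then have "exp (\<alpha>\<^sup>2 * pi\<^sup>2 * L / 8 + \<alpha> * (0 - t)) \<le> exp (\<alpha>\<^sup>2 * pi\<^sup>2 * L / 4 - \<alpha> * t)"
      by simp
    moreover have "pi/2 * sqrt (Psi f L * EG) / (0 + 1/\<alpha>) = pi * \<alpha> / 2 * sqrt (Psi f L * EG)"
      by simp
    ultimately show ?thesis using Psi0 unfolding Delta_def by linarith
  qed
  finally have "(\<integral>x. g x \<partial>std_gauss) \<le> Delta f L \<alpha> t" .
  then have "exp (\<alpha> * t) * (\<integral>x. g x \<partial>std_gauss) \<le> exp (\<alpha> * t) * Delta f L \<alpha> t"
    by simp
  then show ?thesis by (simp add: eq)
qed

lemma tail3:
  assumes t: "0 < t"
  shows "measure std_gauss {x. f x - m > t}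
    \<le> exp (- t\<^sup>2 / (pi\<^sup>2 * L)) + (1 + L powr (-1/2)) * sqrt ((1 / L) * EG * Psi f L)"
proof -
  define \<alpha> where "\<alpha> = 3 * t / (pi\<^sup>2 * L)"
  have a: "0 < \<alpha>" using t Lpos by (simp add: \<alpha>_def)
  have "measure std_gauss {x. f x - m > t}
    \<le> exp (\<alpha>\<^sup>2 * pi\<^sup>2 * L / 8 + \<alpha> * (t/4 - t)) + pi/2 * sqrt (Psi f L * EG) / (t/4 + 1/\<alpha>)"
    by (rule tail[OF a]) (use t in simp)
  also have "\<dots> \<le> exp (- t\<^sup>2 / (pi\<^sup>2 * L)) + (1 + L powr (-1/2)) * sqrt ((1 / L) * EG * Psi f L)"
  proof (rule add_mono)
    have "\<alpha>\<^sup>2 * pi\<^sup>2 * L / 8 + \<alpha> * (t/4 - t) = - 9 * t\<^sup>2 / (8 * pi\<^sup>2 * L)"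
      using Lpos by (simp add: \<alpha>_def power2_eq_square field_simps)
    also have "\<dots> \<le> - t\<^sup>2 / (pi\<^sup>2 * L)"
      using Lpos by (simp add: field_simps)
    finally show "exp (\<alpha>\<^sup>2 * pi\<^sup>2 * L / 8 + \<alpha> * (t/4 - t)) \<le> exp (- t\<^sup>2 / (pi\<^sup>2 * L))" by simp
  next
    define S where "S = sqrt (Psi f L * EG)"
    have S0: "0 \<le> S" using EG0 Psi0 by (simp add: S_def)
    have den: "t/4 + 1/\<alpha> = t/4 + pi\<^sup>2 * L / (3 * t)" by (simp add: \<alpha>_def)
    have dpos: "0 < t/4 + pi\<^sup>2 * L / (3 * t)" using t Lpos by (simp add: add_pos_pos)
    have key: "pi/2 * sqrt L \<le> t/4 + pi\<^sup>2 * L / (3 * t)"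
    proof -
      have sL: "(sqrt L)\<^sup>2 = L" using Lpos by simp
      have "0 \<le> 3 * (t - pi * sqrt L)\<^sup>2 + pi\<^sup>2 * L" using Lpos by simp
      also have "\<dots> = 3 * t\<^sup>2 - 6 * pi * t * sqrt L + 4 * pi\<^sup>2 * L"
        using sL by (simp add: power2_diff power_mult_distrib algebra_simps)
      finally have "6 * pi * t * sqrt L \<le> 3 * t\<^sup>2 + 4 * pi\<^sup>2 * L" by simp
      then show ?thesis using t by (simp add: field_simps power2_eq_square)
    qed
    have "pi/2 * S / (t/4 + 1/\<alpha>) \<le> S / sqrt L"
    proof -
      have "pi/2 * S * sqrt L \<le> S * (t/4 + pi\<^sup>2 * L / (3 * t))"
        using mult_left_mono[OF key S0] by (simp add: mult_ac)
      then show ?thesis unfolding den using dpos Lpos by (simp add: field_simps)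
    qed
    also have "S / sqrt L = sqrt ((1 / L) * EG * Psi f L)"
      by (simp add: S_def real_sqrt_divide real_sqrt_mult mult.commute)
    also have "\<dots> \<le> (1 + L powr (-1/2)) * sqrt ((1 / L) * EG * Psi f L)"
    proof -
      have "0 \<le> sqrt ((1 / L) * EG * Psi f L)" using EG0 Psi0 Lpos by simp
      moreover have "0 \<le> L powr (-1/2)" by simp
      ultimately show ?thesis by (simp add: distrib_right)
    qed
    finally show "pi/2 * sqrt (Psi f L * EG) / (t/4 + 1/\<alpha>) \<le> (1 + L powr (-1/2)) * sqrt ((1 / L) * EG * Psi f L)"
      by (simp add: S_def)
  qed
  finally show ?thesis .
qed

end

lemma conc2_I:
  assumes diff: "\<And>x. f differentiable (at x)" and int_f: "integrable std_gauss f"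
    and int_grad: "integrable std_gauss (\<lambda>x. (norm (grad f x))\<^sup>2)" and L: "0 < L"
  shows "conc2 f L"
  using assms by (intro conc2.intro conc.intro conc2_axioms.intro) auto

lemma theorem7_aux:
  fixes f :: "'a::euclidean_space \<Rightarrow> real"
  assumes diff: "\<And>x. f differentiable (at x)"
    and int_f: "integrable std_gauss f"
    and int_grad: "integrable std_gauss (\<lambda>x. (norm (grad f x))\<^sup>2)"
  shows "(\<forall>\<alpha>>0. \<forall>t>0.
           (\<integral>x. min (exp (\<alpha> * (f x - (\<integral>y. f y \<partial>std_gauss)))) (exp (\<alpha> * t)) \<partial>std_gauss)
             \<le> exp (\<alpha> * t) * (INF L\<in>{0<..}. Delta f L \<alpha> t))
    \<and> (\<forall>t>0.
           measure std_gauss {x. \<bar>f x - (\<integral>y. f y \<partial>std_gauss)\<bar> > t}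
             \<le> 2 * (INF p\<in>{0<..} \<times> {0<..}. Delta f (snd p) (fst p) t))
    \<and> (\<forall>L>0. \<forall>t>0.
           measure std_gauss {x. \<bar>f x - (\<integral>y. f y \<partial>std_gauss)\<bar> > t}
             \<le> 2 * exp (- t\<^sup>2 / (pi\<^sup>2 * L))
                + 2 * (1 + L powr (-1/2)) *
                  sqrt ((1 / L) * (\<integral>x. (norm (grad f x))\<^sup>2 \<partial>std_gauss) * Psi f L))"
proof -
  define g where "g = (\<lambda>x. - f x)"
  define m where "m = (\<integral>y. f y \<partial>std_gauss)"
  have fm[measurable]: "f \<in> borel_measurable borel"
    using int_f by (simp add: borel_measurable_integrable[of std_gauss f, simplified])
  have diffg: "\<And>x. g differentiable (at x)" unfolding g_def using diff by (intro differentiable_minus)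
  have gradg: "grad g x = - grad f x" for x unfolding g_def by (rule grad_uminus[OF diff])
  have int_g: "integrable std_gauss g" unfolding g_def using int_f by simp
  have int_gradg: "integrable std_gauss (\<lambda>x. (norm (grad g x))\<^sup>2)" using int_grad by (simp add: gradg)
  have mg: "(\<integral>y. g y \<partial>std_gauss) = - m" unfolding g_def m_def by simp
  have Psig: "Psi g L = Psi f L" for L by (simp add: Psi_def gradg)
  have EGg: "(\<integral>x. (norm (grad g x))\<^sup>2 \<partial>std_gauss) = (\<integral>x. (norm (grad f x))\<^sup>2 \<partial>std_gauss)"
    by (simp add: gradg)
  have Deltag: "Delta g L \<alpha> t = Delta f L \<alpha> t" for L \<alpha> t by (simp add: Delta_def Psig EGg)
  have cf: "conc2 f L" if "0 < L" for L by (rule conc2_I[OF diff int_f int_grad that])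
  have cg: "conc2 g L" if "0 < L" for L by (rule conc2_I[OF diffg int_g int_gradg that])
  have split: "measure std_gauss {x. \<bar>f x - m\<bar> > t}
      \<le> measure std_gauss {x. f x - m > t} + measure std_gauss {x. g x - (\<integral>y. g y \<partial>std_gauss) > t}" for t
  proof -
    have "measure std_gauss {x. \<bar>f x - m\<bar> > t}
        \<le> measure std_gauss ({x. f x - m > t} \<union> {x. g x - (\<integral>y. g y \<partial>std_gauss) > t})"
      by (rule SG.finite_measure_mono) (auto simp: g_def m_def)
    also have "\<dots> \<le> measure std_gauss {x. f x - m > t} + measure std_gauss {x. g x - (\<integral>y. g y \<partial>std_gauss) > t}"
      by (rule measure_Un_le) (auto simp: g_def)
    finally show ?thesis .
  qed
  have P1: "\<forall>\<alpha>>0. \<forall>t>0.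
           (\<integral>x. min (exp (\<alpha> * (f x - m))) (exp (\<alpha> * t)) \<partial>std_gauss)
             \<le> exp (\<alpha> * t) * (INF L\<in>{0<..}. Delta f L \<alpha> t)"
  proof (intro allI impI)
    fix \<alpha> t :: real assume a: "0 < \<alpha>" and t: "0 < t"
    define I where "I = (\<integral>x. min (exp (\<alpha> * (f x - m))) (exp (\<alpha> * t)) \<partial>std_gauss)"
    have "I / exp (\<alpha> * t) \<le> (INF L\<in>{0<..}. Delta f L \<alpha> t)"
    proof (rule cINF_greatest)
      fix L :: real assume "L \<in> {0<..}"
      then have "I \<le> exp (\<alpha> * t) * Delta f L \<alpha> t"
        unfolding I_def m_def using conc2.claim1[OF cf a] by simp
      then show "I / exp (\<alpha> * t) \<le> Delta f L \<alpha> t" by (simp add: field_simps)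
    qed simp
    then show "I \<le> exp (\<alpha> * t) * (INF L\<in>{0<..}. Delta f L \<alpha> t)"
      unfolding I_def by (simp add: field_simps)
  qed
  have P2: "\<forall>t>0. measure std_gauss {x. \<bar>f x - m\<bar> > t}
             \<le> 2 * (INF p\<in>{0<..} \<times> {0<..}. Delta f (snd p) (fst p) t)"
  proof (intro allI impI)
    fix t :: real assume t: "0 < t"
    have "measure std_gauss {x. \<bar>f x - m\<bar> > t} / 2 \<le> (INF p\<in>{0<..} \<times> {0<..}. Delta f (snd p) (fst p) t)"
    proof (rule cINF_greatest)
      fix p :: "real \<times> real" assume p: "p \<in> {0<..} \<times> {0<..}"
      then have a: "0 < fst p" and L: "0 < snd p" by auto
      have "measure std_gauss {x. f x - m > t} \<le> Delta f (snd p) (fst p) t"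
        unfolding m_def by (rule conc2.tail_Delta[OF cf[OF L] a])
      moreover have "measure std_gauss {x. g x - (\<integral>y. g y \<partial>std_gauss) > t} \<le> Delta f (snd p) (fst p) t"
        using conc2.tail_Delta[OF cg[OF L] a, of t] by (simp add: Deltag)
      ultimately show "measure std_gauss {x. \<bar>f x - m\<bar> > t} / 2 \<le> Delta f (snd p) (fst p) t"
        using split[of t] by simp
    qed simp
    then show "measure std_gauss {x. \<bar>f x - m\<bar> > t} \<le> 2 * (INF p\<in>{0<..} \<times> {0<..}. Delta f (snd p) (fst p) t)"
      by simp
  qed
  have P3: "\<forall>L>0. \<forall>t>0. measure std_gauss {x. \<bar>f x - m\<bar> > t}
             \<le> 2 * exp (- t\<^sup>2 / (pi\<^sup>2 * L))
                + 2 * (1 + L powr (-1/2)) *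
                  sqrt ((1 / L) * (\<integral>x. (norm (grad f x))\<^sup>2 \<partial>std_gauss) * Psi f L)"
  proof (intro allI impI)
    fix L t :: real assume L: "0 < L" and t: "0 < t"
    have "measure std_gauss {x. f x - m > t}
        \<le> exp (- t\<^sup>2 / (pi\<^sup>2 * L)) + (1 + L powr (-1/2)) * sqrt ((1 / L) * (\<integral>x. (norm (grad f x))\<^sup>2 \<partial>std_gauss) * Psi f L)"
      unfolding m_def by (rule conc2.tail3[OF cf[OF L] t])
    moreover have "measure std_gauss {x. g x - (\<integral>y. g y \<partial>std_gauss) > t}
        \<le> exp (- t\<^sup>2 / (pi\<^sup>2 * L)) + (1 + L powr (-1/2)) * sqrt ((1 / L) * (\<integral>x. (norm (grad f x))\<^sup>2 \<partial>std_gauss) * Psi f L)"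
      using conc2.tail3[OF cg[OF L] t] by (simp add: Psig EGg)
    ultimately show "measure std_gauss {x. \<bar>f x - m\<bar> > t}
             \<le> 2 * exp (- t\<^sup>2 / (pi\<^sup>2 * L))
                + 2 * (1 + L powr (-1/2)) *
                  sqrt ((1 / L) * (\<integral>x. (norm (grad f x))\<^sup>2 \<partial>std_gauss) * Psi f L)"
      using split[of t]
      unfolding mult.assoc[of 2 "1 + L powr (-1/2)"] by linarith
  qed
  show ?thesis using P1 P2 P3 unfolding m_def by blast
qed

theorem theorem7:
  fixes f :: "'a::euclidean_space \<Rightarrow> real"
  assumes diff: "\<And>x. f differentiable (at x)"
    and int_f: "integrable std_gauss f"
    and int_grad: "integrable std_gauss (\<lambda>x. (norm (grad f x))\<^sup>2)"
  shows "(\<forall>\<alpha>>0. \<forall>t>0.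
           (\<integral>x. min (exp (\<alpha> * (f x - (\<integral>y. f y \<partial>std_gauss)))) (exp (\<alpha> * t)) \<partial>std_gauss)
             \<le> exp (\<alpha> * t) * (INF L\<in>{0<..}. Delta f L \<alpha> t))
    \<and> (\<forall>t>0.
           measure std_gauss {x. \<bar>f x - (\<integral>y. f y \<partial>std_gauss)\<bar> > t}
             \<le> 2 * (INF p\<in>{0<..} \<times> {0<..}. Delta f (snd p) (fst p) t))
    \<and> (\<forall>L>0. \<forall>t>0.
           measure std_gauss {x. \<bar>f x - (\<integral>y. f y \<partial>std_gauss)\<bar> > t}
             \<le> 2 * exp (- t\<^sup>2 / (pi\<^sup>2 * L))
                + 2 * (1 + L powr (-1/2)) *
                  sqrt ((1 / L) * (\<integral>x. (norm (grad f x))\<^sup>2 \<partial>std_gauss) * Psi f L))"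
  using theorem7_aux[OF diff int_f int_grad] .

end
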